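(* There exists a language $L\subseteq\{0,1\}^*$ with the following two properties. (i) For every $\epsilon>0$, $L$ has a quantum property tester with distance parameter $\epsilon$ making $O(1/\epsilon)$ queries (the constant in the $O$ independent of the input length $n$). (ii) Every classical probabilistic property tester for $L$ with distance parameter $1/3$ makes $\Omega(\log n)$ queries on inputs of length $n$.
   Context: A language $L$ is viewed as the family of properties $P_n=L\cap\{0,1\}^n$; an input $x\in\{0,1\}^n$ is accessed as an oracle $i\mapsto x_i$. For $P\subseteq\{0,1\}^n$ and $\epsilon>0$, $x$ is called $\epsilon$-far from $P$ if $x$ differs from every $y\in P$ in more than $\epsilon n$ positions. A (classical) property tester for $P$ with distance parameter $\epsilon$ is a probabilistic oracle algorithm that accepts every $x\in P$ with probability at least $2/3$ and accepts every $x$ that is $\epsilon$-far from $P$ with probability at most $1/3$; its complexity is the (worst-case) number of oracle queries. A quantum property tester is defined identically except that the algorithm is a quantum algorithm accessing $x$ through the unitary oracle $O_x:\lvert i,b,z\rangle\mapsto\lvert i,b\oplus x_i,z\rangle$. A tester has one-sided error if it accepts every $x\in P$ with probability $1$. *)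

theory Defs
  imports "HOL-Probability.Probability"
begin

text \<open>The oracle bit x_i (for indices beyond the input length it is False).\<close>

definition oracle_bit :: "bool list \<Rightarrow> nat \<Rightarrow> bool" where
  "oracle_bit x i = (i < length x \<and> x ! i)"

definition hamming :: "bool list \<Rightarrow> bool list \<Rightarrow> nat" where
  "hamming x y = card {i. i < length x \<and> x ! i \<noteq> y ! i}"

definition eps_far :: "bool list set \<Rightarrow> nat \<Rightarrow> real \<Rightarrow> bool list \<Rightarrow> bool" where
  "eps_far L n eps x \<longleftrightarrow> (\<forall>y\<in>L. length y = n \<longrightarrow> real (hamming x y) > eps * real n)"

text \<open>Basis states |i,b,z> with i < n (index register), b a bit,
  z < m (workspace of dimension m).\<close>
type_synonym qbasis = "nat \<times> bool \<times> nat"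
type_synonym qstate = "qbasis \<Rightarrow> complex"
type_synonym qop = "qbasis \<Rightarrow> qbasis \<Rightarrow> complex"

definition qspace :: "nat \<Rightarrow> nat \<Rightarrow> qbasis set" where
  "qspace n m = {..<n} \<times> (UNIV :: bool set) \<times> {..<m}"

definition is_unitary :: "nat \<Rightarrow> nat \<Rightarrow> qop \<Rightarrow> bool" where
  "is_unitary n m U \<longleftrightarrow>
     (\<forall>s t. (s \<notin> qspace n m \<or> t \<notin> qspace n m) \<longrightarrow> U s t = 0) \<and>
     (\<forall>s\<in>qspace n m. \<forall>t\<in>qspace n m.
        (\<Sum>k\<in>qspace n m. cnj (U k s) * U k t) = (if s = t then 1 else 0))"

definition qapply :: "nat \<Rightarrow> nat \<Rightarrow> qop \<Rightarrow> qstate \<Rightarrow> qstate" where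
  "qapply n m U \<psi> = (\<lambda>s. if s \<in> qspace n m then (\<Sum>t\<in>qspace n m. U s t * \<psi> t) else 0)"

definition qoracle :: "bool list \<Rightarrow> qstate \<Rightarrow> qstate" where
  "qoracle x \<psi> = (\<lambda>(i, b, z). \<psi> (i, b \<noteq> oracle_bit x i, z))"

definition qinit :: qstate where
  "qinit = (\<lambda>s. if s = (0, False, 0) then 1 else 0)"

text \<open>Final state U_q O_x ... U_1 O_x U_0 |0,0,0>, where Us = [U_1,...,U_q]
  (q = length Us oracle queries).\<close>
definition qfinal :: "nat \<Rightarrow> nat \<Rightarrow> qop \<Rightarrow> qop list \<Rightarrow> bool list \<Rightarrow> qstate" where
  "qfinal n m U0 Us x = foldl (\<lambda>\<psi> U. qapply n m U (qoracle x \<psi>)) (qapply n m U0 qinit) Us"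

definition qaccept_prob :: "nat \<Rightarrow> nat \<Rightarrow> qop \<Rightarrow> qop list \<Rightarrow> qbasis set \<Rightarrow> bool list \<Rightarrow> real" where
  "qaccept_prob n m U0 Us A x = (\<Sum>s\<in>A. (cmod (qfinal n m U0 Us x s))\<^sup>2)"

definition quantum_tester :: "bool list set \<Rightarrow> nat \<Rightarrow> real \<Rightarrow> nat \<Rightarrow> bool" where
  "quantum_tester L n eps q \<longleftrightarrow>
     (\<exists>m U0 Us A. m \<ge> 1 \<and> length Us = q \<and> is_unitary n m U0 \<and>
        (\<forall>U\<in>set Us. is_unitary n m U) \<and> A \<subseteq> qspace n m \<and>
        (\<forall>x. length x = n \<longrightarrow>
           (x \<in> L \<longrightarrow> qaccept_prob n m U0 Us A x \<ge> 2/3) \<and>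
           (eps_far L n eps x \<longrightarrow> qaccept_prob n m U0 Us A x \<le> 1/3)))"

text \<open>A probabilistic oracle algorithm is a probability distribution over
  deterministic adaptive query algorithms (decision trees).
  Query i l r: query x_i, continue in r if x_i = 1, in l otherwise.\<close>
datatype dtree = Leaf bool | Query nat dtree dtree

fun dt_eval :: "dtree \<Rightarrow> bool list \<Rightarrow> bool" where
  "dt_eval (Leaf b) x = b"
| "dt_eval (Query i l r) x = (if oracle_bit x i then dt_eval r x else dt_eval l x)"

fun dt_depth :: "dtree \<Rightarrow> nat" where
  "dt_depth (Leaf b) = 0"
| "dt_depth (Query i l r) = Suc (max (dt_depth l) (dt_depth r))"

definition classical_tester :: "bool list set \<Rightarrow> nat \<Rightarrow> real \<Rightarrow> nat \<Rightarrow> bool" where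
  "classical_tester L n eps q \<longleftrightarrow>
     (\<exists>p :: dtree pmf. (\<forall>T\<in>set_pmf p. dt_depth T \<le> q) \<and>
        (\<forall>x. length x = n \<longrightarrow>
           (x \<in> L \<longrightarrow> measure_pmf.prob p {T. dt_eval T x} \<ge> 2/3) \<and>
           (eps_far L n eps x \<longrightarrow> measure_pmf.prob p {T. dt_eval T x} \<le> 1/3)))"

end

theory Submission
  imports Defs
begin


definition chi :: "nat \<Rightarrow> nat \<Rightarrow> nat \<Rightarrow> real" where
  "chi k s j = (\<Prod>i<k. if bit s i \<and> bit j i then -1 else 1)"

lemma chi_xor: "chi k (xor s s') j = chi k s j * chi k s' j"
  unfolding chi_def prod.distrib[symmetric]
  by (rule prod.cong) (auto simp: bit_xor_iff)

lemma chi_sym: "chi k s j = chi k j s"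
  unfolding chi_def by (rule prod.cong) auto

lemma chi_0[simp]: "chi k s 0 = 1"
  unfolding chi_def by simp

lemma chi_0'[simp]: "chi k 0 j = 1"
  unfolding chi_def by simp

lemma abs_chi[simp]: "\<bar>chi k s j\<bar> = 1"
  unfolding chi_def abs_prod by (rule prod.neutral) auto

lemma pm1: "\<bar>x::real\<bar> = 1 \<Longrightarrow> x = 1 \<or> x = -1" by auto

lemma chi_cases: "chi k s j = 1 \<or> chi k s j = -1"
  using pm1[OF abs_chi] .

lemma xor_lt: "(s::nat) < 2^k \<Longrightarrow> w < 2^k \<Longrightarrow> xor s w < 2^k"
  by (metis take_bit_nat_eq_self_iff take_bit_xor)

lemma prod_single:
  assumes "j \<in> A" "finite A"
  shows "(\<Prod>l\<in>A. if l = j then (a::real) else 1) = a"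
proof -
  have "(\<Prod>l\<in>A. if l = j then (a::real) else 1) = (\<Prod>l\<in>{j}. if l = j then (a::real) else 1)"
    by (rule prod.mono_neutral_right) (use assms in auto)
  then show ?thesis by simp
qed

lemma chi_pow2: "i < k \<Longrightarrow> chi k s (2^i) = (if bit s i then -1 else 1)"
proof -
  assume i: "i < k"
  have "chi k s (2^i) = (\<Prod>l<k. if l = i then (if bit s i then -1 else 1) else 1)"
    unfolding chi_def by (rule prod.cong) (auto simp: bit_exp_iff)
  also have "\<dots> = (if bit s i then -1 else 1)" by (rule prod_single) (use i in auto)
  finally show ?thesis .
qed

lemma nonzero_bit: "(s::nat) \<noteq> 0 \<Longrightarrow> s < 2^k \<Longrightarrow> \<exists>i<k. bit s i"
proof -
  assume "s \<noteq> 0" "s < 2^k"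
  then obtain i where "bit s i" using bit_eq_iff[of s 0] by auto
  moreover have "i < k"
  proof (rule ccontr)
    assume "\<not> i < k"
    then have "\<not> bit (take_bit k s) i" by (simp add: bit_take_bit_iff)
    with \<open>bit s i\<close> \<open>s < 2^k\<close> show False by (simp add: take_bit_nat_eq_self_iff[THEN iffD2])
  qed
  ultimately show ?thesis by blast
qed

lemma involution_sum_zero:
  fixes f :: "nat \<Rightarrow> real"
  assumes "finite D" "\<And>s. s \<in> D \<Longrightarrow> xor s d \<in> D" "\<And>s. s \<in> D \<Longrightarrow> f (xor s d) = - f s"
  shows "sum f D = 0"
proof -
  have "sum f D = sum (\<lambda>s. f (xor s d)) D"
    by (rule sum.reindex_bij_witness[of _ "\<lambda>s. xor s d" "\<lambda>s. xor s d"])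
       (use assms(2) in \<open>auto simp: xor.assoc\<close>)
  also have "\<dots> = - sum f D" using assms(3) by (simp add: sum_negf)
  finally show ?thesis by simp
qed

lemma char_sum:
  assumes "u < 2^k"
  shows "(\<Sum>s<2^k. chi k s u) = (if u = 0 then 2^k else 0)"
proof (cases "u = 0")
  case True then show ?thesis by simp
next
  case False
  then obtain i where i: "i < k" "bit u i" using nonzero_bit assms by blast
  have "(\<Sum>s<2^k. chi k s u) = 0"
  proof (rule involution_sum_zero[where d = "2^i"])
    fix s assume "s \<in> {..<(2::nat)^k}"
    then show "xor s (2^i) \<in> {..<2^k}" using xor_lt i by (simp add: less_trans)
    show "chi k (xor s (2^i)) u = - chi k s u"
      using chi_xor[of k s "2^i" u] chi_sym[of k "2^i" u] chi_pow2[OF i(1), of u] i by simp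
  qed simp
  then show ?thesis using False by simp
qed


definition G :: "nat \<Rightarrow> nat \<Rightarrow> real" where
  "G r s = (\<Prod>i<r. if bit s i \<and> bit s (i+r) then -1 else 1)"

definition B :: "nat \<Rightarrow> nat \<Rightarrow> nat \<Rightarrow> real" where
  "B r s w = (\<Prod>i<r. (if bit s i \<and> bit w (i+r) then -1 else 1) * (if bit s (i+r) \<and> bit w i then -1 else 1))"

lemma abs_G[simp]: "\<bar>G r s\<bar> = 1"
  unfolding G_def abs_prod by (rule prod.neutral) auto

lemma abs_B[simp]: "\<bar>B r s w\<bar> = 1"
  unfolding B_def abs_prod by (rule prod.neutral) (auto simp: abs_mult)

lemma G_sq: "G r s * G r s = 1"
  using pm1[OF abs_G[of r s]] by auto

lemma G_xor: "G r (xor s w) = G r s * G r w * B r s w"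
  unfolding G_def B_def prod.distrib[symmetric]
  by (rule prod.cong) (auto simp: bit_xor_iff)

lemma B_sym: "B r s w = B r w s"
  unfolding B_def by (rule prod.cong) auto

lemma B_xor: "B r (xor s s') w = B r s w * B r s' w"
  unfolding B_def prod.distrib[symmetric]
  by (rule prod.cong) (auto simp: bit_xor_iff)

lemma B_xor2: "B r w (xor s s') = B r w s * B r w s'"
  using B_xor B_sym by metis

lemma B_0[simp]: "B r 0 w = 1"
  unfolding B_def by simp

lemma B_pow2_a:
  assumes "i < r" "bit d i"
  shows "B r d (2^(i+r)) = -1"
proof -
  have "B r d (2^(i+r)) = (\<Prod>l<r. if l = i then -1 else 1)"
    unfolding B_def by (rule prod.cong) (use assms in \<open>auto simp: bit_exp_iff\<close>)
  also have "\<dots> = -1" by (rule prod_single) (use assms in auto)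
  finally show ?thesis .
qed

lemma B_pow2_b:
  assumes "i < r" "bit d (i+r)"
  shows "B r d (2^i) = -1"
proof -
  have "B r d (2^i) = (\<Prod>l<r. if l = i then -1 else 1)"
    unfolding B_def by (rule prod.cong) (use assms in \<open>auto simp: bit_exp_iff\<close>)
  also have "\<dots> = -1" by (rule prod_single) (use assms in auto)
  finally show ?thesis .
qed

lemma four_pow: "(4::nat)^r = 2^(2*r)"
  by (simp add: power_mult)

lemma B_sum:
  assumes "d < 4^r"
  shows "(\<Sum>w<4^r. B r d w) = (if d = 0 then 4^r else 0)"
proof (cases "d = 0")
  case True then show ?thesis by simp
next
  case False
  then obtain i where i: "i < 2*r" "bit d i" using nonzero_bit assms four_pow by metis
  obtain j where j: "j < 2*r" "B r d (2^j) = -1"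
  proof (cases "i < r")
    case True
    then show ?thesis using that[of "i+r"] B_pow2_a[OF True i(2)] by simp
  next
    case False
    then have "i - r < r" "bit d (i - r + r)" using i by auto
    then show ?thesis using that[of "i - r"] B_pow2_b by simp
  qed
  have "(\<Sum>w<4^r. B r d w) = 0"
  proof (rule involution_sum_zero[where d = "2^j"])
    fix s assume "s \<in> {..<(4::nat)^r}"
    then show "xor s (2^j) \<in> {..<4^r}" using xor_lt[of s "2*r" "2^j"] j four_pow
      by (simp add: less_trans)
    show "B r d (xor s (2^j)) = - B r d s"
      using B_xor2[of r d s "2^j"] j by simp
  qed simp
  then show ?thesis using False by simp
qed

definition Vset :: "nat \<Rightarrow> (nat \<times> bool) list \<Rightarrow> nat set" where
  "Vset r C = {s. s < 4^r \<and> (\<forall>p\<in>set C. (chi (2*r) s (fst p) = -1) = snd p)}"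

definition Dset :: "nat \<Rightarrow> (nat \<times> bool) list \<Rightarrow> nat set" where
  "Dset r C = {s. s < 4^r \<and> (\<forall>p\<in>set C. chi (2*r) s (fst p) = 1)}"

lemma xor_lt4: "(s::nat) < 4^r \<Longrightarrow> w < 4^r \<Longrightarrow> xor s w < 4^r"
  using xor_lt four_pow by metis

lemma D_xor: "a \<in> Dset r C \<Longrightarrow> d \<in> Dset r C \<Longrightarrow> xor a d \<in> Dset r C"
  unfolding Dset_def by (auto simp: chi_xor xor_lt4)

lemma VD_xor: "a \<in> Vset r C \<Longrightarrow> d \<in> Dset r C \<Longrightarrow> xor a d \<in> Vset r C"
  unfolding Vset_def Dset_def by (fastforce simp: chi_xor xor_lt4)

lemma VV_xor: "a \<in> Vset r C \<Longrightarrow> s \<in> Vset r C \<Longrightarrow> xor a s \<in> Dset r C"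
proof -
  assume a: "a \<in> Vset r C" and s: "s \<in> Vset r C"
  show ?thesis unfolding Dset_def
  proof (intro CollectI conjI ballI)
    show "xor a s < 4^r" using a s xor_lt4 unfolding Vset_def by auto
    fix p assume p: "p \<in> set C"
    then have "(chi (2*r) a (fst p) = -1) = snd p" "(chi (2*r) s (fst p) = -1) = snd p"
      using a s unfolding Vset_def by auto
    then show "chi (2 * r) (xor a s) (fst p) = 1"
      using chi_cases[of "2*r" a "fst p"] chi_cases[of "2*r" s "fst p"] by (auto simp: chi_xor)
  qed
qed

lemma finite_V[simp]: "finite (Vset r C)" unfolding Vset_def by auto
lemma finite_D[simp]: "finite (Dset r C)" unfolding Dset_def by auto
lemma D_0: "0 \<in> Dset r C" unfolding Dset_def by auto
lemma D_sub: "Dset r C \<subseteq> {..<4^r}" unfolding Dset_def by auto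

lemma sum_V_reindex:
  assumes "a \<in> Vset r C"
  shows "sum f (Vset r C) = (\<Sum>d\<in>Dset r C. f (xor a d))"
  by (rule sum.reindex_bij_witness[of _ "\<lambda>s. xor a s" "\<lambda>s. xor a s"])
     (use assms VD_xor VV_xor in \<open>auto simp: xor.assoc[symmetric]\<close>)

lemma sum_D_B_nonneg: "(\<Sum>e\<in>Dset r C. B r e d) \<ge> 0"
proof (cases "\<exists>e0\<in>Dset r C. B r e0 d = -1")
  case True
  then obtain e0 where e0: "e0 \<in> Dset r C" "B r e0 d = -1" by blast
  have "(\<Sum>e\<in>Dset r C. B r e d) = 0"
    by (rule involution_sum_zero[where d = e0]) (use e0 D_xor in \<open>auto simp: B_xor\<close>)
  then show ?thesis by simp
next
  case False
  then have "\<forall>e\<in>Dset r C. B r e d = 1" using pm1[OF abs_B] by blast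
  then show ?thesis by simp
qed

lemma key_lemma: "(\<Sum>s\<in>Vset r C. G r s)^2 \<le> 4^r"
proof (cases "Vset r C = {}")
  case True then show ?thesis by simp
next
  case False
  then obtain a where a: "a \<in> Vset r C" by blast
  let ?V = "Vset r C" and ?D = "Dset r C"
  have "(\<Sum>s\<in>?V. G r s)^2 = (\<Sum>s\<in>?V. G r s * (\<Sum>s'\<in>?V. G r s'))"
    by (simp add: power2_eq_square sum_distrib_right)
  also have "\<dots> = (\<Sum>s\<in>?V. \<Sum>d\<in>?D. G r d * B r s d)"
  proof (rule sum.cong[OF refl])
    fix s assume s: "s \<in> ?V"
    have "G r s * (\<Sum>s'\<in>?V. G r s') = G r s * (\<Sum>d\<in>?D. G r (xor s d))"
      using sum_V_reindex[OF s, of "G r"] by simp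
    also have "\<dots> = (\<Sum>d\<in>?D. (G r s * G r s) * G r d * B r s d)"
      by (simp add: sum_distrib_left G_xor mult.assoc)
    finally show "G r s * (\<Sum>s'\<in>?V. G r s') = (\<Sum>d\<in>?D. G r d * B r s d)" by (simp add: G_sq)
  qed
  also have "\<dots> = (\<Sum>d\<in>?D. G r d * (\<Sum>s\<in>?V. B r s d))"
    by (subst sum.swap) (simp add: sum_distrib_left)
  also have "\<dots> = (\<Sum>d\<in>?D. G r d * B r a d * (\<Sum>e\<in>?D. B r e d))"
    by (rule sum.cong[OF refl]) (simp add: sum_V_reindex[OF a] B_xor sum_distrib_left mult.assoc)
  also have "\<dots> \<le> (\<Sum>d\<in>?D. (\<Sum>e\<in>?D. B r e d))"
  proof (rule sum_mono)
    fix d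
    have "G r d * B r a d * (\<Sum>e\<in>?D. B r e d) \<le> \<bar>G r d * B r a d * (\<Sum>e\<in>?D. B r e d)\<bar>" by simp
    also have "\<dots> = (\<Sum>e\<in>?D. B r e d)" using sum_D_B_nonneg[where C=C and d=d] by (simp add: abs_mult)
    finally show "G r d * B r a d * (\<Sum>e\<in>?D. B r e d) \<le> (\<Sum>e\<in>?D. B r e d)" .
  qed
  also have "\<dots> \<le> (\<Sum>d<4^r. (\<Sum>e\<in>?D. B r e d))"
    by (rule sum_mono2) (use D_sub sum_D_B_nonneg in auto)
  also have "\<dots> = (\<Sum>e\<in>?D. (\<Sum>d<4^r. B r e d))" by (rule sum.swap)
  also have "\<dots> = (\<Sum>e\<in>?D. if e = 0 then 4^r else 0)"
  proof (rule sum.cong[OF refl])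
    fix e assume "e \<in> ?D"
    then have "e < 4^r" using D_sub by auto
    then show "(\<Sum>d<4^r. B r e d) = (if e = 0 then 4^r else 0)" by (rule B_sum)
  qed
  also have "\<dots> = 4^r" using D_0[of r C] by (simp add: sum.delta)
  finally show ?thesis .
qed

lemma key_abs: "\<bar>\<Sum>s\<in>Vset r C. G r s\<bar> \<le> 2^r"
proof -
  have "\<bar>\<Sum>s\<in>Vset r C. G r s\<bar>^2 \<le> (2^r)^2"
  proof -
    have "(4::real)^r = (2^r)^2"
      by (metis power_mult mult.commute numeral_Bit0_eq_double mult_2 power2_eq_square)
    then show ?thesis using key_lemma[of r C] by simp
  qed
  then show ?thesis by (rule power2_le_imp_le) simp
qed


definition rr :: "nat \<Rightarrow> nat" where
  "rr n = Max {r. r \<le> n \<and> (r = 0 \<or> 2 * 4^r \<le> n)}"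

lemma rr_mem: "rr n \<in> {r. r \<le> n \<and> (r = 0 \<or> 2 * 4^r \<le> n)}"
  unfolding rr_def by (rule Max_in) auto

lemma rr_ge: "r \<le> n \<Longrightarrow> 2 * 4^r \<le> n \<Longrightarrow> r \<le> rr n"
  unfolding rr_def by (rule Max_ge) auto

lemma rr_le: "n \<ge> 1 \<Longrightarrow> 4^(rr n) \<le> n"
  using rr_mem[of n] by auto

lemma rr_ge2: "n \<ge> 2 \<Longrightarrow> 2 * 4^(rr n) \<le> n"
proof -
  assume n: "n \<ge> 2"
  have "0 \<le> rr n" by simp
  from rr_mem[of n] consider "rr n = 0" | "2 * 4^rr n \<le> n" by auto
  then show ?thesis using n by cases auto
qed

lemma pow4_ge: "r < (4::nat)^r"
  by (induction r) auto

lemma rr_max: "n < 2 * 4^(Suc (rr n))"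
proof (rule ccontr)
  assume "\<not> n < 2 * 4^(Suc (rr n))"
  then have h: "2 * 4^(Suc (rr n)) \<le> n" by simp
  then have "Suc (rr n) \<le> n" using pow4_ge[of "Suc (rr n)"] by linarith
  then have "Suc (rr n) \<le> rr n" using rr_ge h by blast
  then show False by simp
qed

definition codeR :: "nat \<Rightarrow> nat \<Rightarrow> nat \<Rightarrow> bool list" where
  "codeR r n s = map (\<lambda>j. chi (2*r) s (j mod 4^r) = -1) [0..<n]"

definition Lang :: "bool list set" where
  "Lang = {x. \<exists>s < 4^rr (length x). G (rr (length x)) s = 1 \<and> x = codeR (rr (length x)) (length x) s}"

lemma length_codeR[simp]: "length (codeR r n s) = n"
  unfolding codeR_def by simp

lemma nth_codeR: "j < n \<Longrightarrow> codeR r n s ! j = (chi (2*r) s (j mod 4^r) = -1)"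
  unfolding codeR_def by simp

definition uq :: "nat \<Rightarrow> nat \<Rightarrow> nat \<Rightarrow> nat" where
  "uq r n j = (if j < n then j mod 4^r else 0)"

lemma oracle_codeR: "oracle_bit (codeR r n s) j = (chi (2*r) s (uq r n j) = -1)"
  unfolding oracle_bit_def uq_def by (auto simp: nth_codeR)

lemma Vset_split:
  "Vset r C = Vset r ((u,True)#C) \<union> Vset r ((u,False)#C)"
  "Vset r ((u,True)#C) \<inter> Vset r ((u,False)#C) = {}"
  unfolding Vset_def by auto

lemma tree_lemma:
  "\<bar>\<Sum>s\<in>Vset r C. G r s * (if dt_eval T (codeR r n s) then 1 else 0)\<bar> \<le> 2^(dt_depth T) * 2^r"
proof (induction T arbitrary: C)
  case (Leaf b)
  then show ?case using key_abs[of r C] by auto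
next
  case (Query j l rt)
  let ?u = "uq r n j"
  let ?f = "\<lambda>T s. G r s * (if dt_eval T (codeR r n s) then 1 else 0)"
  have s1: "(\<Sum>s\<in>Vset r ((?u,True)#C). ?f (Query j l rt) s) = (\<Sum>s\<in>Vset r ((?u,True)#C). ?f rt s)"
    by (rule sum.cong[OF refl]) (auto simp: Vset_def oracle_codeR)
  have s2: "(\<Sum>s\<in>Vset r ((?u,False)#C). ?f (Query j l rt) s) = (\<Sum>s\<in>Vset r ((?u,False)#C). ?f l s)"
    by (rule sum.cong[OF refl]) (auto simp: Vset_def oracle_codeR)
  have "(\<Sum>s\<in>Vset r C. ?f (Query j l rt) s) =
        (\<Sum>s\<in>Vset r ((?u,True)#C). ?f (Query j l rt) s) + (\<Sum>s\<in>Vset r ((?u,False)#C). ?f (Query j l rt) s)"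
    by (subst Vset_split(1)[of r C ?u], rule sum.union_disjoint) (auto simp: Vset_split(2))
  also have "\<dots> = (\<Sum>s\<in>Vset r ((?u,True)#C). ?f rt s) + (\<Sum>s\<in>Vset r ((?u,False)#C). ?f l s)"
    using s1 s2 by simp
  finally have eq: "(\<Sum>s\<in>Vset r C. ?f (Query j l rt) s) = \<dots>" .
  have a: "\<bar>\<Sum>s\<in>Vset r ((?u,True)#C). ?f rt s\<bar> \<le> 2^(max (dt_depth l) (dt_depth rt)) * 2^r"
    using Query.IH(2)[of "(?u,True)#C"] by (rule order.trans) (simp add: power_increasing)
  have b: "\<bar>\<Sum>s\<in>Vset r ((?u,False)#C). ?f l s\<bar> \<le> 2^(max (dt_depth l) (dt_depth rt)) * 2^r"
    using Query.IH(1)[of "(?u,False)#C"] by (rule order.trans) (simp add: power_increasing)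
  show ?case unfolding eq using a b by simp
qed

lemma count_minus:
  assumes "u < 4^r" "u \<noteq> 0"
  shows "2 * card {j. j < 4^r \<and> chi (2*r) u j = -1} = 4^r"
proof -
  let ?M = "{j. j < 4^r \<and> chi (2*r) u j = -1}" and ?P = "{j. j < 4^r \<and> chi (2*r) u j = 1}"
  have u2: "u < 2^(2*r)" using assms four_pow by metis
  have "(\<Sum>j<2^(2*r). chi (2*r) j u) = 0" using char_sum[OF u2] assms by simp
  moreover have "(\<Sum>j<4^r. chi (2*r) u j) = (\<Sum>j<2^(2*r). chi (2*r) j u)"
    by (simp only: four_pow chi_sym[of _ u])
  ultimately have z: "(\<Sum>j<4^r. chi (2*r) u j) = 0" by simp
  have un: "{..<4^r} = ?P \<union> ?M"
  proof (rule set_eqI)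
    fix j show "j \<in> {..<4^r} \<longleftrightarrow> j \<in> ?P \<union> ?M" using chi_cases[of "2*r" u j] by auto
  qed
  have dj: "?P \<inter> ?M = {}" by auto
  have fP: "finite ?P" "finite ?M" by auto
  have "(\<Sum>j<4^r. chi (2*r) u j) = (\<Sum>j\<in>?P. chi (2*r) u j) + (\<Sum>j\<in>?M. chi (2*r) u j)"
    unfolding un by (rule sum.union_disjoint[OF fP dj])
  also have "(\<Sum>j\<in>?P. chi (2*r) u j) = (\<Sum>j\<in>?P. 1)" by (rule sum.cong) auto
  also have "(\<Sum>j\<in>?M. chi (2*r) u j) = (\<Sum>j\<in>?M. -1)" by (rule sum.cong) auto
  finally have e1: "real (card ?P) = real (card ?M)" using z by simp
  have "card ?P + card ?M = card {..<(4::nat)^r}" unfolding un by (rule card_Un_disjoint[OF fP dj, symmetric])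
  then show ?thesis using e1 by simp
qed
lemma periodic_card:
  assumes "K > 0"
  shows "card {j. j < t*K \<and> P (j mod K)} = t * card {j. j < K \<and> P j}"
proof -
  have "{j. j < t*K \<and> P (j mod K)} = (\<lambda>(a,b). a*K+b) ` ({..<t} \<times> {j. j < K \<and> P j})"
  proof (rule set_eqI, rule iffI)
    fix j assume j: "j \<in> {j. j < t*K \<and> P (j mod K)}"
    then have "j div K < t" using assms by (simp add: div_less_iff_less_mult)
    then show "j \<in> (\<lambda>(a,b). a*K+b) ` ({..<t} \<times> {j. j < K \<and> P j})"
      using j assms by (intro image_eqI[of _ _ "(j div K, j mod K)"]) auto
  next
    fix j assume "j \<in> (\<lambda>(a,b). a*K+b) ` ({..<t} \<times> {j. j < K \<and> P j})"
    then obtain a b where ab: "a < t" "b < K" "P b" "j = a*K+b" by auto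
    have "a*K + b < (a+1)*K" using ab by simp
    also have "\<dots> \<le> t*K" using ab by (intro mult_right_mono) auto
    finally show "j \<in> {j. j < t*K \<and> P (j mod K)}" using ab by simp
  qed
  moreover have "inj_on (\<lambda>(a,b). a*K+b) ({..<t} \<times> {j. j < K \<and> P j})"
  proof (rule inj_onI, clarsimp)
    fix a b a' b' assume "b < K" "b' < K" "a*K+b = a'*K+b'"
    then have "(a*K+b) div K = (a'*K+b') div K" "(a*K+b) mod K = (a'*K+b') mod K" by simp_all
    then show "a = a' \<and> b = b'" using \<open>b<K\<close> \<open>b'<K\<close> assms by simp
  qed
  ultimately show ?thesis by (simp add: card_image card_cartesian_product)
qed

lemma xor_neq0: "(s::nat) \<noteq> s' \<Longrightarrow> xor s s' \<noteq> 0"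
  by (metis xor.assoc xor_self_eq xor.left_neutral xor.right_neutral)

lemma hamming_codeR:
  assumes "s < 4^r" "s' < 4^r" "s \<noteq> s'" "2 * 4^r \<le> n"
  shows "real (hamming (codeR r n s) (codeR r n s')) > real n / 3"
proof -
  let ?K = "4^r::nat"
  let ?u = "xor s s'"
  have u: "?u < 4^r" "?u \<noteq> 0" using assms xor_lt4 xor_neq0 by auto
  have Kp: "?K > 0" by simp
  define t where "t = n div ?K"
  have "(2 * ?K) div ?K \<le> n div ?K" by (rule div_le_mono) (use assms(4) in simp)
  then have t2: "t \<ge> 2" unfolding t_def by simp
  have nlt: "n < (t+1) * ?K"
  proof -
    have "t * ?K + n mod ?K = n" unfolding t_def by (rule div_mult_mod_eq)
    moreover have "n mod ?K < ?K" by simp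
    moreover have "(t+1) * ?K = t * ?K + ?K" by simp
    ultimately show ?thesis by linarith
  qed
  have "hamming (codeR r n s) (codeR r n s') = card {j. j < n \<and> chi (2*r) ?u (j mod ?K) = -1}"
    unfolding hamming_def
  proof (intro arg_cong[where f=card] set_eqI iffI)
    fix j assume "j \<in> {i. i < length (codeR r n s) \<and> codeR r n s ! i \<noteq> codeR r n s' ! i}"
    then show "j \<in> {j. j < n \<and> chi (2*r) ?u (j mod ?K) = -1}"
      using chi_cases[of "2*r" s "j mod ?K"] chi_cases[of "2*r" s' "j mod ?K"]
      by (auto simp: nth_codeR chi_xor)
  next
    fix j assume "j \<in> {j. j < n \<and> chi (2*r) ?u (j mod ?K) = -1}"
    then show "j \<in> {i. i < length (codeR r n s) \<and> codeR r n s ! i \<noteq> codeR r n s' ! i}"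
      using chi_cases[of "2*r" s "j mod ?K"] chi_cases[of "2*r" s' "j mod ?K"]
      by (auto simp: nth_codeR chi_xor)
  qed
  also have "\<dots> \<ge> card {j. j < t * ?K \<and> chi (2*r) ?u (j mod ?K) = -1}"
  proof (rule card_mono)
    show "finite {j. j < n \<and> chi (2*r) ?u (j mod ?K) = -1}" by simp
    have "t * ?K \<le> n" unfolding t_def by simp
    then show "{j. j < t * ?K \<and> chi (2*r) ?u (j mod ?K) = -1} \<subseteq> {j. j < n \<and> chi (2*r) ?u (j mod ?K) = -1}"
      by auto
  qed
  finally have h: "hamming (codeR r n s) (codeR r n s') \<ge> t * card {j. j < ?K \<and> chi (2*r) ?u j = -1}"
    using periodic_card[OF Kp, of t "\<lambda>j. chi (2*r) ?u j = -1"] by simp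
  define hh where "hh = hamming (codeR r n s) (codeR r n s')"
  define c where "c = card {j. j < ?K \<and> chi (2*r) ?u j = -1}"
  have h': "t * c \<le> hh" using h unfolding hh_def c_def .
  have c2: "2 * c = ?K" using count_minus[OF u] unfolding c_def .
  have "t * ?K = 2 * (t * c)" using c2 by (metis mult.left_commute)
  then have "t * ?K \<le> 2 * hh" using h' by linarith
  then have "real (t * ?K) \<le> real (2 * hh)" by (simp only: of_nat_le_iff)
  then have r1: "real t * real ?K \<le> 2 * real hh" by simp
  have "real n < real ((t+1) * ?K)" using nlt by (simp only: of_nat_less_iff)
  then have r2: "real n < real t * real ?K + real ?K" by (simp add: algebra_simps)
  have r3: "real t * real ?K \<ge> 2 * real ?K" using t2 by (intro mult_right_mono) auto
  from r1 r2 r3 have "real hh > real n / 3" by linarith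
  then show ?thesis unfolding hh_def .
qed


lemma Vset_nil: "Vset r [] = {..<4^r}" by (auto simp: Vset_def)

lemma code_in_Lang: "s < 4^rr n \<Longrightarrow> G (rr n) s = 1 \<Longrightarrow> codeR (rr n) n s \<in> Lang"
  unfolding Lang_def by auto

lemma code_far:
  assumes "n \<ge> 2" "s < 4^rr n" "G (rr n) s \<noteq> 1"
  shows "eps_far Lang n (1/3) (codeR (rr n) n s)"
  unfolding eps_far_def
proof (intro ballI impI)
  fix y assume y: "y \<in> Lang" "length y = n"
  then obtain s' where s': "s' < 4^rr n" "G (rr n) s' = 1" "y = codeR (rr n) n s'"
    unfolding Lang_def by auto
  have "s \<noteq> s'" using s' assms by auto
  then have "real (hamming (codeR (rr n) n s) y) > real n / 3"
    using hamming_codeR[OF assms(2) s'(1) _ rr_ge2[OF assms(1)]] s'(3) by simp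
  then show "real (hamming (codeR (rr n) n s) y) > 1/3 * real n" by simp
qed

lemma classical_bound:
  assumes n: "n \<ge> 2" and ct: "classical_tester Lang n (1/3) q"
  shows "(4::real)^rr n / 6 - 2^rr n / 2 \<le> 2^q * 2^rr n"
proof -
  let ?r = "rr n"
  from ct obtain p :: "dtree pmf" where dep: "\<forall>T\<in>set_pmf p. dt_depth T \<le> q"
    and acc: "\<forall>x. length x = n \<longrightarrow>
           (x \<in> Lang \<longrightarrow> measure_pmf.prob p {T. dt_eval T x} \<ge> 2/3) \<and>
           (eps_far Lang n (1/3) x \<longrightarrow> measure_pmf.prob p {T. dt_eval T x} \<le> 1/3)"
    unfolding classical_tester_def by blast
  define P where "P s = measure_pmf.prob p {T. dt_eval T (codeR ?r n s)}" for s
  have low: "G ?r s * P s \<ge> G ?r s / 2 + 1/6" if s: "s < 4^?r" for s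
  proof (cases "G ?r s = 1")
    case True
    then have "P s \<ge> 2/3" using acc code_in_Lang[OF s True] unfolding P_def by simp
    then show ?thesis using True by simp
  next
    case False
    then have G: "G ?r s = -1" using pm1[OF abs_G[of ?r s]] by auto
    have "P s \<le> 1/3" using acc code_far[OF n s False] unfolding P_def by simp
    then show ?thesis using G by simp
  qed
  have "(\<Sum>s<4^?r. G ?r s / 2 + 1/6) \<le> (\<Sum>s<4^?r. G ?r s * P s)"
    by (rule sum_mono) (use low in auto)
  moreover have "(\<Sum>s<4^?r. G ?r s / 2 + 1/6) = (\<Sum>s<4^?r. G ?r s) / 2 + 4^?r / 6"
    by (simp add: sum.distrib sum_divide_distrib)
  moreover have "(\<Sum>s<4^?r. G ?r s) \<ge> - (2^?r)"
    using key_abs[of ?r "[]"] unfolding Vset_nil by simp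
  ultimately have L: "4^?r / 6 - 2^?r / 2 \<le> (\<Sum>s<4^?r. G ?r s * P s)" by simp
  define f where "f T = (\<Sum>s<4^?r. G ?r s * (if dt_eval T (codeR ?r n s) then 1 else 0))" for T
  have intg: "integrable (measure_pmf p) (\<lambda>T. G ?r s * indicator {T. dt_eval T (codeR ?r n s)} T)" for s
    by (rule integrable_mult_right) (rule integrable_real_indicator, auto simp: less_top[symmetric] measure_pmf.emeasure_finite)
  have "(\<Sum>s<4^?r. G ?r s * P s) = (\<Sum>s<4^?r. measure_pmf.expectation p (\<lambda>T. G ?r s * indicator {T. dt_eval T (codeR ?r n s)} T))"
    unfolding P_def by (rule sum.cong[OF refl]) (simp add: measure_pmf.emeasure_eq_measure)
  also have "\<dots> = measure_pmf.expectation p (\<lambda>T. \<Sum>s<4^?r. G ?r s * indicator {T. dt_eval T (codeR ?r n s)} T)"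
    using Bochner_Integration.integral_sum[where I="{..<4^?r}" and M="measure_pmf p" and f="\<lambda>s T. G ?r s * indicator {T. dt_eval T (codeR ?r n s)} T"] intg
    by simp
  also have "\<dots> = measure_pmf.expectation p f"
    unfolding f_def by (intro Bochner_Integration.integral_cong refl sum.cong) (simp add: indicator_def)
  also have "\<dots> \<le> 2^q * 2^?r"
  proof (rule measure_pmf.integral_le_const)
    show "integrable (measure_pmf p) f"
    proof -
      have "f = (\<lambda>T. \<Sum>s<4^?r. G ?r s * indicator {T. dt_eval T (codeR ?r n s)} T)"
        unfolding f_def by (intro ext sum.cong refl) (simp add: indicator_def)
      moreover have "integrable (measure_pmf p) (\<lambda>T. \<Sum>s<4^?r. G ?r s * indicator {T. dt_eval T (codeR ?r n s)} T)"
        by (rule Bochner_Integration.integrable_sum) (rule intg)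
      ultimately show ?thesis by simp
    qed
    show "AE x in measure_pmf p. f x \<le> 2^q * 2^?r"
      using AE_measure_pmf[of p]
    proof (rule eventually_mono)
      fix T assume T: "T \<in> set_pmf p"
      have "f T \<le> \<bar>f T\<bar>" by simp
      also have "\<dots> \<le> 2^(dt_depth T) * 2^?r"
        using tree_lemma[where r="?r" and C="[]" and T=T and n=n] unfolding f_def Vset_nil by simp
      also have "\<dots> \<le> 2^q * 2^?r" using dep T by (simp add: power_increasing)
      finally show "f T \<le> 2^q * 2^?r" .
    qed
  qed
  finally show ?thesis using L by simp
qed

lemma classical_part:
  "\<exists>c > 0. \<exists>N. \<forall>n \<ge> N. \<forall>q. classical_tester Lang n (1/3) q \<longrightarrow> real q \<ge> c * ln (real n)"
proof (intro exI[of _ "1/10"] conjI exI[of _ 2048] allI impI)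
  show "(0::real) < 1/10" by simp
  fix n q assume n: "2048 \<le> n" and ct: "classical_tester Lang n (1/3) q"
  let ?r = "rr n"
  have r5: "5 \<le> ?r" by (rule rr_ge) (use n in auto)
  have b: "(4::real)^?r / 6 - 2^?r / 2 \<le> 2^q * 2^?r" using classical_bound[OF _ ct] n by simp
  define X :: real where "X = 2^?r"
  have X4: "(4::real)^?r = X * X" unfolding X_def by (simp add: power_mult_distrib[symmetric])
  have X32: "X \<ge> 32"
  proof -
    have "(2::real)^5 \<le> 2^?r" using r5 by (rule power_increasing) simp
    then show ?thesis unfolding X_def by simp
  qed
  have b2: "X / 6 - 1/2 \<le> 2^q"
  proof -
    have "X * (X / 6 - 1/2) \<le> X * 2^q" using b unfolding X4 X_def[symmetric] by (simp add: algebra_simps)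
    then show ?thesis using X32 by (simp add: mult_le_cancel_left)
  qed
  have qr: "real ?r \<le> real q + 3"
  proof (rule ccontr)
    assume "\<not> ?thesis"
    then have "q + 4 \<le> ?r" by linarith
    then have "(2::real)^(q+4) \<le> X" unfolding X_def by (rule power_increasing) simp
    then have "2^q * 16 \<le> X" by (simp add: power_add)
    then show False using b2 X32 by simp
  qed
  have "real n < 2 * 4^(Suc ?r)" using rr_max[of n] by (metis of_nat_less_iff of_nat_numeral of_nat_mult of_nat_power)
  also have "(2::real) * 4^(Suc ?r) = 2^(2 * ?r + 3)"
    by (simp add: power_add power_mult)
  finally have nl: "real n < 2^(2 * ?r + 3)" .
  have "ln (real n) < ln (2^(2 * ?r + 3))" using nl n by (intro ln_less_cancel_iff[THEN iffD2]) auto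
  also have "\<dots> = real (2 * ?r + 3) * ln 2" by (simp add: ln_realpow)
  also have "\<dots> \<le> real (2 * ?r + 3) * 1"
    using ln_le_minus_one[of 2] by (intro mult_left_mono) auto
  finally have "ln (real n) < 2 * real ?r + 3" by simp
  then have "1/10 * ln (real n) \<le> (2 * real ?r + 3) / 10" by simp
  also have "\<dots> \<le> real q" using qr r5 by simp
  finally show "1/10 * ln (real n) \<le> real q" .
qed


lemma qspace_mem[simp]: "(i, b, z) \<in> qspace n m \<longleftrightarrow> i < n \<and> z < m"
  unfolding qspace_def by auto

lemma finite_qspace[simp]: "finite (qspace n m)"
  unfolding qspace_def by auto

definition dsumq :: "'w set \<Rightarrow> ('w \<Rightarrow> complex) \<Rightarrow> ('w \<Rightarrow> qbasis) \<Rightarrow> qstate" where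
  "dsumq \<Omega> c bas = (\<lambda>s. \<Sum>\<omega>\<in>\<Omega>. if bas \<omega> = s then c \<omega> else 0)"

lemma dsumq_cong: "(\<And>\<omega>. \<omega> \<in> \<Omega> \<Longrightarrow> bas \<omega> = bas' \<omega>) \<Longrightarrow> dsumq \<Omega> c bas = dsumq \<Omega> c bas'"
  unfolding dsumq_def by (intro ext sum.cong) auto

lemma qapply_dsumq:
  assumes "finite \<Omega>" "bas ` \<Omega> \<subseteq> qspace n m"
  shows "qapply n m U (dsumq \<Omega> c bas) = (\<lambda>s. if s \<in> qspace n m then (\<Sum>\<omega>\<in>\<Omega>. c \<omega> * U s (bas \<omega>)) else 0)"
proof (rule ext)
  fix s
  show "qapply n m U (dsumq \<Omega> c bas) s = (if s \<in> qspace n m then (\<Sum>\<omega>\<in>\<Omega>. c \<omega> * U s (bas \<omega>)) else 0)"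
  proof (cases "s \<in> qspace n m")
    case True
    have "(\<Sum>t\<in>qspace n m. U s t * dsumq \<Omega> c bas t) = (\<Sum>t\<in>qspace n m. \<Sum>\<omega>\<in>\<Omega>. if bas \<omega> = t then c \<omega> * U s t else 0)"
      unfolding dsumq_def by (simp add: sum_distrib_left if_distrib mult.commute cong: if_cong)
    also have "\<dots> = (\<Sum>\<omega>\<in>\<Omega>. \<Sum>t\<in>qspace n m. if bas \<omega> = t then c \<omega> * U s t else 0)"
      by (rule sum.swap)
    also have "\<dots> = (\<Sum>\<omega>\<in>\<Omega>. c \<omega> * U s (bas \<omega>))"
    proof (rule sum.cong[OF refl])
      fix \<omega> assume "\<omega> \<in> \<Omega>"
      then have "bas \<omega> \<in> qspace n m" using assms by auto
      then show "(\<Sum>t\<in>qspace n m. if bas \<omega> = t then c \<omega> * U s t else 0) = c \<omega> * U s (bas \<omega>)"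
        by (simp add: sum.delta)
    qed
    finally show ?thesis using True unfolding qapply_def by simp
  next
    case False then show ?thesis unfolding qapply_def by simp
  qed
qed

definition flipq :: "bool list \<Rightarrow> qbasis \<Rightarrow> qbasis" where
  "flipq x = (\<lambda>(i, b, z). (i, b \<noteq> oracle_bit x i, z))"

lemma flipq_flip[simp]: "flipq x (flipq x s) = s"
  unfolding flipq_def by (cases s) auto

lemma qoracle_dsumq: "qoracle x (dsumq \<Omega> c bas) = dsumq \<Omega> c (flipq x \<circ> bas)"
proof (rule ext)
  fix s :: qbasis
  obtain i b z where s: "s = (i, b, z)" by (cases s) auto
  have "\<And>\<omega>. (bas \<omega> = (i, b \<noteq> oracle_bit x i, z)) = (flipq x (bas \<omega>) = (i, b, z))"
    by (metis (no_types, lifting) case_prod_conv flipq_def flipq_flip)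
  then show "qoracle x (dsumq \<Omega> c bas) s = dsumq \<Omega> c (flipq x \<circ> bas) s"
    unfolding qoracle_def dsumq_def s by simp
qed

lemma flipq_in[simp]: "flipq x s \<in> qspace n m \<longleftrightarrow> s \<in> qspace n m"
  unfolding flipq_def by (cases s) auto

definition permU :: "nat \<Rightarrow> nat \<Rightarrow> (qbasis \<Rightarrow> qbasis) \<Rightarrow> qop" where
  "permU n m \<pi> = (\<lambda>s t. if t \<in> qspace n m \<and> s = \<pi> t then 1 else 0)"

lemma permU_unitary:
  assumes "bij_betw \<pi> (qspace n m) (qspace n m)"
  shows "is_unitary n m (permU n m \<pi>)"
  unfolding is_unitary_def
proof (intro conjI allI impI ballI)
  fix s t assume "s \<notin> qspace n m \<or> t \<notin> qspace n m"
  then show "permU n m \<pi> s t = 0" unfolding permU_def using assms bij_betwE by fastforce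
next
  fix s t assume s: "s \<in> qspace n m" and t: "t \<in> qspace n m"
  have "(\<Sum>k\<in>qspace n m. cnj (permU n m \<pi> k s) * permU n m \<pi> k t)
      = (\<Sum>k\<in>qspace n m. if k = \<pi> s then (if \<pi> s = \<pi> t then 1 else 0) else 0)"
    unfolding permU_def using s t by (intro sum.cong) auto
  also have "\<dots> = (if \<pi> s = \<pi> t then 1 else 0)"
    using bij_betwE[OF assms] s by (simp add: sum.delta)
  also have "\<dots> = (if s = t then 1 else 0)"
    using bij_betw_imp_inj_on[OF assms] s t by (auto dest: inj_onD)
  finally show "(\<Sum>k\<in>qspace n m. cnj (permU n m \<pi> k s) * permU n m \<pi> k t) = (if s = t then 1 else 0)" .
qed

lemma qapply_permU_dsumq:
  assumes "finite \<Omega>" "bas ` \<Omega> \<subseteq> qspace n m" "\<pi> ` qspace n m \<subseteq> qspace n m"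
  shows "qapply n m (permU n m \<pi>) (dsumq \<Omega> c bas) = dsumq \<Omega> c (\<pi> \<circ> bas)"
proof (rule ext)
  fix s
  show "qapply n m (permU n m \<pi>) (dsumq \<Omega> c bas) s = dsumq \<Omega> c (\<pi> \<circ> bas) s"
  proof (cases "s \<in> qspace n m")
    case True
    have "qapply n m (permU n m \<pi>) (dsumq \<Omega> c bas) s = (\<Sum>\<omega>\<in>\<Omega>. c \<omega> * permU n m \<pi> s (bas \<omega>))"
      using True by (simp add: qapply_dsumq[OF assms(1,2)])
    also have "\<dots> = dsumq \<Omega> c (\<pi> \<circ> bas) s"
      unfolding dsumq_def permU_def using assms(2) by (intro sum.cong) auto
    finally show ?thesis .
  next
    case False
    have "\<And>\<omega>. \<omega> \<in> \<Omega> \<Longrightarrow> \<pi> (bas \<omega>) \<noteq> s" using assms(2,3) False by auto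
    then have "dsumq \<Omega> c (\<pi> \<circ> bas) s = 0" unfolding dsumq_def by (intro sum.neutral) auto
    moreover have "qapply n m (permU n m \<pi>) (dsumq \<Omega> c bas) s = 0" using False by (simp add: qapply_def)
    ultimately show ?thesis by simp
  qed
qed

definition e0 :: qbasis where "e0 = (0, False, 0)"

definition hhU :: "nat \<Rightarrow> nat \<Rightarrow> (qbasis \<Rightarrow> real) \<Rightarrow> qop" where
  "hhU n m w = (let u = (\<lambda>k. (if k = e0 then 1 else 0) - w k);
                    \<nu> = (\<Sum>k\<in>qspace n m. (u k)^2) in
     (\<lambda>s t. if s \<in> qspace n m \<and> t \<in> qspace n m then
        complex_of_real ((if s = t then 1 else 0) - 2 * u s * u t / \<nu>) else 0))"

lemma householder:
  assumes e: "e0 \<in> qspace n m" and norm: "(\<Sum>k\<in>qspace n m. (w k)^2) = 1" and we: "w e0 \<noteq> 1"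
  shows "is_unitary n m (hhU n m w)"
    and "qapply n m (hhU n m w) qinit = (\<lambda>s. if s \<in> qspace n m then complex_of_real (w s) else 0)"
proof -
  define u where "u k = (if k = e0 then 1 else 0) - w k" for k
  define \<nu> where "\<nu> = (\<Sum>k\<in>qspace n m. (u k)^2)"
  let ?Q = "qspace n m"
  have "(\<Sum>k\<in>?Q. (u k)^2) = (\<Sum>k\<in>?Q. (if k = e0 then 1 - 2 * w k else 0) + (w k)^2)"
    unfolding u_def by (intro sum.cong) (auto simp: power2_eq_square algebra_simps)
  also have "\<dots> = 2 - 2 * w e0" using e norm by (simp add: sum.distrib sum.delta)
  finally have nu: "\<nu> = 2 - 2 * w e0" unfolding \<nu>_def .
  have "(w e0)^2 \<le> 1"
  proof -
    have "(w e0)^2 \<le> (\<Sum>k\<in>?Q. (w k)^2)" using e by (intro member_le_sum) auto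
    then show ?thesis using norm by simp
  qed
  then have "w e0 \<le> 1" by (metis abs_le_square_iff abs_of_nonneg linear one_power2 order_trans power2_le_imp_le zero_le_one abs_ge_self)
  then have nupos: "\<nu> > 0" using we nu by simp
  have H: "hhU n m w = (\<lambda>s t. if s \<in> ?Q \<and> t \<in> ?Q then
        complex_of_real ((if s = t then 1 else 0) - 2 * u s * u t / \<nu>) else 0)"
    unfolding hhU_def u_def \<nu>_def Let_def by simp
  show "is_unitary n m (hhU n m w)"
    unfolding is_unitary_def
  proof (intro conjI allI impI ballI)
    fix s t assume "s \<notin> ?Q \<or> t \<notin> ?Q"
    then show "hhU n m w s t = 0" unfolding H by auto
  next
    fix s t assume s: "s \<in> ?Q" and t: "t \<in> ?Q"
    have "(\<Sum>k\<in>?Q. cnj (hhU n m w k s) * hhU n m w k t) =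
       complex_of_real (\<Sum>k\<in>?Q. ((if k = s then 1 else 0) - 2 * u k * u s / \<nu>) * ((if k = t then 1 else 0) - 2 * u k * u t / \<nu>))"
      unfolding H using s t by (simp add: of_real_sum)
    also have "(\<Sum>k\<in>?Q. ((if k = s then 1 else 0) - 2 * u k * u s / \<nu>) * ((if k = t then 1 else 0) - 2 * u k * u t / \<nu>))
       = (\<Sum>k\<in>?Q. (if k = s then (if k = t then 1 else 0) else 0) - (if k = s then 2 * u k * u t / \<nu> else 0)
            - (if k = t then 2 * u k * u s / \<nu> else 0) + (u k)^2 * (4 * u s * u t / \<nu>^2))"
      by (intro sum.cong) (auto simp: algebra_simps power2_eq_square)
    also have "\<dots> = (if s = t then 1 else 0) - 2 * u s * u t / \<nu> - 2 * u t * u s / \<nu> + \<nu> * (4 * u s * u t / \<nu>^2)"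
    proof -
      have sq: "(\<Sum>k\<in>?Q. (u k)^2 * (4 * u s * u t / \<nu>^2)) = \<nu> * (4 * u s * u t / \<nu>^2)"
        unfolding \<nu>_def by (rule sum_distrib_right[symmetric])
      show ?thesis using s t by (simp only: sum.distrib sum_subtractf sq) (simp add: sum.delta)
    qed
    also have "\<dots> = (if s = t then 1 else 0)" using nupos by (simp add: field_simps power2_eq_square)
    finally show "(\<Sum>k\<in>?Q. cnj (hhU n m w k s) * hhU n m w k t) = (if s = t then 1 else 0)" by simp
  qed
  show "qapply n m (hhU n m w) qinit = (\<lambda>s. if s \<in> ?Q then complex_of_real (w s) else 0)"
  proof (rule ext)
    fix s
    have "(\<Sum>t\<in>?Q. hhU n m w s t * qinit t) = hhU n m w s e0"
      unfolding qinit_def e0_def[symmetric] using e by (simp add: sum.delta if_distrib cong: if_cong)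
    moreover have "s \<in> ?Q \<Longrightarrow> hhU n m w s e0 = complex_of_real (w s)"
    proof -
      assume s: "s \<in> ?Q"
      have "u e0 = 1 - w e0" unfolding u_def by simp
      then have "2 * u s * u e0 / \<nu> = u s" using nu nupos by (simp add: field_simps)
      then show ?thesis unfolding H using s e by (simp add: u_def)
    qed
    ultimately show "qapply n m (hhU n m w) qinit s = (if s \<in> ?Q then complex_of_real (w s) else 0)"
      unfolding qapply_def by simp
  qed
qed


definition hh1 :: "nat \<Rightarrow> nat \<Rightarrow> nat \<Rightarrow> real" where
  "hh1 k a i = (if a < 2^k \<and> i < 2^k then chi k a i / sqrt (2^k) else if a = i then 1 else 0)"

definition hU :: "nat \<Rightarrow> nat \<Rightarrow> nat \<Rightarrow> qop" where
  "hU n m k = (\<lambda>s t. if s \<in> qspace n m \<and> t \<in> qspace n m \<and> snd s = snd t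
      then complex_of_real (hh1 k (fst s) (fst t)) else 0)"

lemma hh1_zero: "\<not> (a < 2^k \<and> i < 2^k) \<Longrightarrow> a \<noteq> i \<Longrightarrow> hh1 k a i = 0"
  unfolding hh1_def by (simp only: if_False)

lemma hh1_id: "\<not> i < 2^k \<Longrightarrow> hh1 k i i = 1"
  by (simp add: hh1_def)

lemma hh1_orth:
  assumes "2^k \<le> n" "i < n" "i' < n"
  shows "(\<Sum>a<n. hh1 k a i * hh1 k a i') = (if i = i' then 1 else 0)"
proof -
  let ?K = "2^k :: nat"
  consider "i < ?K" "i' < ?K" | "i < ?K" "\<not> i' < ?K" | "\<not> i < ?K" "i' < ?K" | "\<not> i < ?K" "\<not> i' < ?K" by blast
  then show ?thesis
  proof cases
    case 1
    have "(\<Sum>a<n. hh1 k a i * hh1 k a i') = (\<Sum>a<?K. hh1 k a i * hh1 k a i')"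
    proof (rule sum.mono_neutral_right)
      show "\<forall>a\<in>{..<n} - {..<?K}. hh1 k a i * hh1 k a i' = 0"
      proof
        fix a assume "a \<in> {..<n} - {..<?K}"
        then have "hh1 k a i = 0" using 1 by (intro hh1_zero) auto
        then show "hh1 k a i * hh1 k a i' = 0" by simp
      qed
    qed (use assms in auto)
    also have "\<dots> = (\<Sum>a<?K. chi k a (xor i i') / 2^k)"
    proof (rule sum.cong[OF refl])
      fix a assume a: "a \<in> {..<?K}"
      have c: "chi k a (xor i i') = chi k a i * chi k a i'" by (metis chi_sym chi_xor)
      have sq: "sqrt (2^k) * sqrt (2^k) = (2^k::real)" by simp
      have "hh1 k a i * hh1 k a i' = chi k a i * chi k a i' / (sqrt (2^k) * sqrt (2^k))"
        using 1 a by (simp add: hh1_def)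
      then show "hh1 k a i * hh1 k a i' = chi k a (xor i i') / 2^k" unfolding c sq .
    qed
    also have "\<dots> = (\<Sum>a<?K. chi k a (xor i i')) / 2^k" by (simp add: sum_divide_distrib)
    also have "\<dots> = (if i = i' then 1 else 0)"
      using char_sum[OF xor_lt[OF 1]] xor_neq0[of i i'] by (cases "i = i'") auto
    finally show ?thesis .
  next
    case 2
    have "(\<Sum>a<n. hh1 k a i * hh1 k a i') = (\<Sum>a<n. 0)"
    proof (rule sum.cong[OF refl])
      fix a
      show "hh1 k a i * hh1 k a i' = 0"
      proof (cases "a < ?K")
        case True then have "hh1 k a i' = 0" using 2 by (intro hh1_zero) auto
        then show ?thesis by simp
      next
        case False then have "hh1 k a i = 0" using 2 by (intro hh1_zero) auto
        then show ?thesis by simp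
      qed
    qed
    then show ?thesis using 2 by auto
  next
    case 3
    have "(\<Sum>a<n. hh1 k a i * hh1 k a i') = (\<Sum>a<n. 0)"
    proof (rule sum.cong[OF refl])
      fix a
      show "hh1 k a i * hh1 k a i' = 0"
      proof (cases "a < ?K")
        case True then have "hh1 k a i = 0" using 3 by (intro hh1_zero) auto
        then show ?thesis by simp
      next
        case False then have "hh1 k a i' = 0" using 3 by (intro hh1_zero) auto
        then show ?thesis by simp
      qed
    qed
    then show ?thesis using 3 by auto
  next
    case 4
    have "(\<Sum>a<n. hh1 k a i * hh1 k a i') = (\<Sum>a<n. if a = i then (if i = i' then 1 else 0) else 0)"
    proof (rule sum.cong[OF refl])
      fix a
      show "hh1 k a i * hh1 k a i' = (if a = i then (if i = i' then 1 else 0) else 0)"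
      proof (cases "a = i")
        case True then show ?thesis using 4 hh1_id[of i k] hh1_zero[of i k i'] by auto
      next
        case False then have "hh1 k a i = 0" using 4 by (intro hh1_zero) auto
        then show ?thesis using False by simp
      qed
    qed
    then show ?thesis using assms by (simp add: sum.delta)
  qed
qed

lemma sum_slice:
  assumes "\<And>k. k \<in> qspace n m \<Longrightarrow> snd k \<noteq> p \<Longrightarrow> g k = 0" "snd p < m"
  shows "(\<Sum>k\<in>qspace n m. g k) = (\<Sum>a<n. g (a, p))"
proof -
  have "(\<Sum>k\<in>qspace n m. g k) = (\<Sum>k\<in>(\<lambda>a. (a, p)) ` {..<n}. g k)"
  proof (rule sum.mono_neutral_right)
    show "finite (qspace n m)" by simp
    show "(\<lambda>a. (a, p)) ` {..<n} \<subseteq> qspace n m" using assms(2) by (cases p) auto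
    show "\<forall>k\<in>qspace n m - (\<lambda>a. (a, p)) ` {..<n}. g k = 0"
    proof
      fix k assume k: "k \<in> qspace n m - (\<lambda>a. (a, p)) ` {..<n}"
      have "snd k \<noteq> p"
      proof
        assume "snd k = p"
        then have "k = (fst k, p)" by (cases k) auto
        moreover have "fst k < n" using k by (cases k) (auto simp: qspace_def)
        ultimately show False using k by blast
      qed
      then show "g k = 0" using assms(1) k by blast
    qed
  qed
  also have "\<dots> = (\<Sum>a<n. g (a, p))" by (subst sum.reindex) (auto simp: inj_on_def)
  finally show ?thesis .
qed

lemma hU_unitary:
  assumes "2^k \<le> n"
  shows "is_unitary n m (hU n m k)"
  unfolding is_unitary_def
proof (intro conjI allI impI ballI)
  fix s t assume "s \<notin> qspace n m \<or> t \<notin> qspace n m"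
  then show "hU n m k s t = 0" unfolding hU_def by auto
next
  fix s t assume s: "s \<in> qspace n m" and t: "t \<in> qspace n m"
  obtain i b z where sp: "s = (i, b, z)" by (cases s) auto
  obtain i' b' z' where tp: "t = (i', b', z')" by (cases t) auto
  have i: "i < n" "i' < n" "z < m" "z' < m" using s t sp tp by auto
  show "(\<Sum>q\<in>qspace n m. cnj (hU n m k q s) * hU n m k q t) = (if s = t then 1 else 0)"
  proof (cases "(b, z) = (b', z')")
    case True
    have "(\<Sum>q\<in>qspace n m. cnj (hU n m k q s) * hU n m k q t) = (\<Sum>a<n. cnj (hU n m k (a,b,z) s) * hU n m k (a,b,z) t)"
    proof (rule sum_slice)
      fix q assume "q \<in> qspace n m" "snd q \<noteq> (b, z)"
      then show "cnj (hU n m k q s) * hU n m k q t = 0" unfolding hU_def sp by simp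
    qed (use i in simp)
    also have "\<dots> = (\<Sum>a<n. complex_of_real (hh1 k a i * hh1 k a i'))"
    proof (rule sum.cong[OF refl])
      fix a assume "a \<in> {..<n}"
      then show "cnj (hU n m k (a,b,z) s) * hU n m k (a,b,z) t = complex_of_real (hh1 k a i * hh1 k a i')"
        unfolding hU_def sp tp using i True by simp
    qed
    also have "\<dots> = complex_of_real (\<Sum>a<n. hh1 k a i * hh1 k a i')" by (simp only: of_real_sum)
    also have "\<dots> = (if s = t then 1 else 0)" using hh1_orth[OF assms i(1,2)] sp tp True by auto
    finally show ?thesis .
  next
    case False
    have "(\<Sum>q\<in>qspace n m. cnj (hU n m k q s) * hU n m k q t) = 0"
    proof (rule sum.neutral, rule ballI)
      fix q assume "q \<in> qspace n m"
      show "cnj (hU n m k q s) * hU n m k q t = 0" unfolding hU_def sp tp using False by auto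
    qed
    then show ?thesis using sp tp False by auto
  qed
qed


definition Wset :: "nat \<Rightarrow> nat \<Rightarrow> (nat \<times> bool) list set" where
  "Wset n t = {cs. length cs = Suc t \<and> (\<forall>c\<in>set cs. fst c < n)}"

lemma finite_Wset[simp]: "finite (Wset n t)"
proof -
  have "Wset n t \<subseteq> {xs. set xs \<subseteq> {..<n} \<times> (UNIV::bool set) \<and> length xs = Suc t}"
    unfolding Wset_def by auto
  moreover have "finite {xs. set xs \<subseteq> {..<n} \<times> (UNIV::bool set) \<and> length xs = Suc t}"
    by (rule finite_lists_length_eq) auto
  ultimately show ?thesis by (rule finite_subset)
qed

definition mm :: "nat \<Rightarrow> nat \<Rightarrow> nat" where "mm n t = card (Wset n t)"

definition enc :: "nat \<Rightarrow> nat \<Rightarrow> (nat \<times> bool) list \<Rightarrow> nat" where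
  "enc n t = (SOME h. bij_betw h (Wset n t) {0..<mm n t})"

lemma enc_bij: "bij_betw (enc n t) (Wset n t) {0..<mm n t}"
  unfolding enc_def mm_def by (rule someI_ex[OF ex_bij_betw_finite_nat[OF finite_Wset]])

definition dec :: "nat \<Rightarrow> nat \<Rightarrow> nat \<Rightarrow> (nat \<times> bool) list" where
  "dec n t = the_inv_into (Wset n t) (enc n t)"

lemma enc_inj: "inj_on (enc n t) (Wset n t)"
  using enc_bij bij_betw_imp_inj_on by blast

lemma dec_enc[simp]: "cs \<in> Wset n t \<Longrightarrow> dec n t (enc n t cs) = cs"
  unfolding dec_def by (rule the_inv_into_f_f[OF enc_inj])

lemma enc_lt: "cs \<in> Wset n t \<Longrightarrow> enc n t cs < mm n t"
  using bij_betwE[OF enc_bij] by fastforce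

lemma enc_dec: "z < mm n t \<Longrightarrow> enc n t (dec n t z) = z"
  unfolding dec_def by (rule f_the_inv_into_f_bij_betw[OF enc_bij]) auto

lemma dec_in: "z < mm n t \<Longrightarrow> dec n t z \<in> Wset n t"
  unfolding dec_def
  by (rule the_inv_into_into[OF enc_inj]) (use enc_bij in \<open>auto simp: bij_betw_def\<close>)

lemma enc_eq_iff: "cs \<in> Wset n t \<Longrightarrow> cs' \<in> Wset n t \<Longrightarrow> enc n t cs = enc n t cs' \<longleftrightarrow> cs = cs'"
  using enc_inj inj_onD by metis

lemma mm_pos: "n \<ge> 1 \<Longrightarrow> mm n t \<ge> 1"
proof -
  assume "n \<ge> 1"
  then have "replicate (Suc t) (0, False) \<in> Wset n t" unfolding Wset_def by auto
  then have "Wset n t \<noteq> {}" by auto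
  then show ?thesis unfolding mm_def by (simp add: Suc_leI card_gt_0_iff)
qed

definition swapc :: "nat \<Rightarrow> nat \<Rightarrow> nat \<Rightarrow> qbasis \<Rightarrow> qbasis" where
  "swapc n t l s = (let cs = dec n t (snd (snd s)) in
     (fst (cs!l), snd (cs!l), enc n t (cs[l := (fst s, fst (snd s))])))"

lemma upd_W: "cs \<in> Wset n t \<Longrightarrow> i < n \<Longrightarrow> cs[l := (i, b)] \<in> Wset n t"
  unfolding Wset_def by (auto dest: subsetD[OF set_update_subset_insert])

lemma nth_W: "cs \<in> Wset n t \<Longrightarrow> l \<le> t \<Longrightarrow> fst (cs!l) < n"
  unfolding Wset_def by auto

lemma swapc_enc:
  "cs \<in> Wset n t \<Longrightarrow> swapc n t l (i, b, enc n t cs) = (fst (cs!l), snd (cs!l), enc n t (cs[l := (i,b)]))"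
  unfolding swapc_def by simp

lemma swapc_in:
  assumes "l \<le> t" "s \<in> qspace n (mm n t)"
  shows "swapc n t l s \<in> qspace n (mm n t)"
proof -
  obtain i b z where s: "s = (i, b, z)" by (cases s) auto
  have z: "z < mm n t" "i < n" using assms s by auto
  have cs: "dec n t z \<in> Wset n t" using dec_in[OF z(1)] .
  show ?thesis unfolding s swapc_def using nth_W[OF cs assms(1)] enc_lt[OF upd_W[OF cs z(2)]]
    by (simp add: Let_def)
qed

lemma swapc_inv:
  assumes "l \<le> t" "s \<in> qspace n (mm n t)"
  shows "swapc n t l (swapc n t l s) = s"
proof -
  obtain i b z where s: "s = (i, b, z)" by (cases s) auto
  have z: "z < mm n t" "i < n" using assms s by auto
  have cs: "dec n t z \<in> Wset n t" using dec_in[OF z(1)] .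
  have len: "l < length (dec n t z)" using cs assms(1) unfolding Wset_def by auto
  have "swapc n t l s = (fst (dec n t z ! l), snd (dec n t z ! l), enc n t ((dec n t z)[l := (i,b)]))"
    unfolding s swapc_def by (simp add: Let_def)
  also have "swapc n t l \<dots> = (i, b, enc n t (((dec n t z)[l := (i,b)])[l := dec n t z ! l]))"
    by (subst swapc_enc[OF upd_W[OF cs z(2)]]) (simp add: len)
  also have "\<dots> = s" using len by (simp add: s enc_dec[OF z(1)])
  finally show ?thesis .
qed

lemma swapc_bij: "l \<le> t \<Longrightarrow> bij_betw (swapc n t l) (qspace n (mm n t)) (qspace n (mm n t))"
  by (rule bij_betw_byWitness[where f'="swapc n t l"]) (auto simp: swapc_inv swapc_in)

definition piq :: "nat \<Rightarrow> nat \<Rightarrow> nat \<Rightarrow> qbasis \<Rightarrow> qbasis" where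
  "piq n t i = swapc n t (Suc i) \<circ> swapc n t i"

lemma piq_bij: "i < t \<Longrightarrow> bij_betw (piq n t i) (qspace n (mm n t)) (qspace n (mm n t))"
  unfolding piq_def by (rule bij_betw_trans) (auto intro: swapc_bij)

lemma piq_in: "i < t \<Longrightarrow> piq n t i ` qspace n (mm n t) \<subseteq> qspace n (mm n t)"
  using piq_bij bij_betw_imp_surj_on by blast

definition Jset :: "nat \<Rightarrow> nat \<Rightarrow> nat list set" where
  "Jset n t = {J. set J \<subseteq> {..<n} \<and> length J = t}"

definition Om :: "nat \<Rightarrow> nat \<Rightarrow> nat \<Rightarrow> (nat list \<times> nat \<times> bool) set" where
  "Om n t K = Jset n t \<times> {..<K} \<times> UNIV"

lemma finite_Jset[simp]: "finite (Jset n t)"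
  unfolding Jset_def by (rule finite_lists_length_eq) auto

lemma card_Jset: "card (Jset n t) = n^t"
  unfolding Jset_def by (subst card_lists_length_eq) auto

lemma finite_Om[simp]: "finite (Om n t K)"
  unfolding Om_def by auto

lemma card_Om: "card (Om n t K) = n^t * K * 2"
  unfolding Om_def by (simp add: card_cartesian_product card_Jset)

definition cellsAt :: "bool list \<Rightarrow> nat \<Rightarrow> nat \<Rightarrow> nat list \<times> nat \<times> bool \<Rightarrow> (nat \<times> bool) list" where
  "cellsAt x t i \<omega> = map (\<lambda>c. if c < i then (fst \<omega> ! c, oracle_bit x (fst \<omega> ! c))
      else if c = i then (0, False) else if c < t then (fst \<omega> ! c, False) else (fst (snd \<omega>), snd (snd \<omega>))) [0..<Suc t]"

definition bas :: "bool list \<Rightarrow> nat \<Rightarrow> nat \<Rightarrow> nat \<Rightarrow> nat list \<times> nat \<times> bool \<Rightarrow> qbasis" where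
  "bas x n t i \<omega> = (if i < t then fst \<omega> ! i else fst (snd \<omega>), if i < t then False else snd (snd \<omega>),
      enc n t (cellsAt x t i \<omega>))"

lemma length_cellsAt[simp]: "length (cellsAt x t i \<omega>) = Suc t"
  unfolding cellsAt_def by simp

lemma nth_cellsAt: "c \<le> t \<Longrightarrow> cellsAt x t i \<omega> ! c = (if c < i then (fst \<omega> ! c, oracle_bit x (fst \<omega> ! c))
      else if c = i then (0, False) else if c < t then (fst \<omega> ! c, False) else (fst (snd \<omega>), snd (snd \<omega>)))"
  unfolding cellsAt_def by (simp del: upt_Suc add: nth_map_upt)

lemma Om_mem: "\<omega> \<in> Om n t K \<longleftrightarrow> set (fst \<omega>) \<subseteq> {..<n} \<and> length (fst \<omega>) = t \<and> fst (snd \<omega>) < K"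
  unfolding Om_def Jset_def by (cases \<omega>) auto

lemma cellsAt_W:
  assumes "\<omega> \<in> Om n t K" "K \<le> n" "n \<ge> 1" "i \<le> t"
  shows "cellsAt x t i \<omega> \<in> Wset n t"
  unfolding Wset_def
proof (intro CollectI conjI ballI)
  show "length (cellsAt x t i \<omega>) = Suc t" by simp
  fix c assume "c \<in> set (cellsAt x t i \<omega>)"
  then obtain l where l: "l < Suc t" "c = cellsAt x t i \<omega> ! l" by (auto simp: in_set_conv_nth)
  have J: "\<And>l. l < t \<Longrightarrow> fst \<omega> ! l < n" using assms(1) unfolding Om_mem by (auto simp: subset_iff)
  have j0: "fst (snd \<omega>) < n" using assms(1,2) unfolding Om_mem by auto
  show "fst c < n" using l nth_cellsAt[of l t x i \<omega>] J j0 assms(3,4) by auto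
qed

lemma bas_in:
  assumes "\<omega> \<in> Om n t K" "K \<le> n" "n \<ge> 1" "i \<le> t"
  shows "bas x n t i \<omega> \<in> qspace n (mm n t)"
proof -
  have J: "\<And>l. l < t \<Longrightarrow> fst \<omega> ! l < n" using assms(1) unfolding Om_mem by (auto simp: subset_iff)
  have j0: "fst (snd \<omega>) < n" using assms(1,2) unfolding Om_mem by auto
  show ?thesis unfolding bas_def using J j0 enc_lt[OF cellsAt_W[OF assms]] by auto
qed

lemma step:
  assumes "\<omega> \<in> Om n t K" "K \<le> n" "n \<ge> 1" "i < t"
  shows "piq n t i (flipq x (bas x n t i \<omega>)) = bas x n t (Suc i) \<omega>"
proof -
  let ?cs = "cellsAt x t i \<omega>"
  let ?J = "fst \<omega>"
  have W: "?cs \<in> Wset n t" using cellsAt_W[OF assms(1-3)] assms(4) by simp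
  have Ji: "?J ! i < n" using assms(1,4) unfolding Om_mem by (auto simp: subset_iff)
  have f: "flipq x (bas x n t i \<omega>) = (?J ! i, oracle_bit x (?J ! i), enc n t ?cs)"
    unfolding bas_def flipq_def using assms(4) by simp
  have s1: "swapc n t i (?J ! i, oracle_bit x (?J ! i), enc n t ?cs) = (0, False, enc n t (?cs[i := (?J ! i, oracle_bit x (?J ! i))]))"
    using swapc_enc[OF W] nth_cellsAt[of i t x i \<omega>] assms(4) by simp
  let ?cs' = "?cs[i := (?J ! i, oracle_bit x (?J ! i))]"
  have W': "?cs' \<in> Wset n t" using upd_W[OF W Ji] .
  have c1: "?cs' ! Suc i = (if Suc i < t then (?J ! Suc i, False) else (fst (snd \<omega>), snd (snd \<omega>)))"
    using nth_cellsAt[of "Suc i" t x i \<omega>] assms(4) by simp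
  have eqc: "?cs'[Suc i := (0, False)] = cellsAt x t (Suc i) \<omega>"
  proof (rule nth_equalityI)
    show "length (?cs'[Suc i := (0, False)]) = length (cellsAt x t (Suc i) \<omega>)" by simp
    fix c assume "c < length (?cs'[Suc i := (0, False)])"
    then have c: "c \<le> t" by simp
    show "?cs'[Suc i := (0, False)] ! c = cellsAt x t (Suc i) \<omega> ! c"
      using nth_cellsAt[OF c, of x i \<omega>] nth_cellsAt[OF c, of x "Suc i" \<omega>] assms(4) c
      by (auto simp: nth_list_update)
  qed
  have "piq n t i (flipq x (bas x n t i \<omega>)) = swapc n t (Suc i) (0, False, enc n t ?cs')"
    unfolding piq_def f using s1 by simp
  also have "\<dots> = (fst (?cs' ! Suc i), snd (?cs' ! Suc i), enc n t (?cs'[Suc i := (0, False)]))"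
    using swapc_enc[OF W'] by simp
  also have "\<dots> = bas x n t (Suc i) \<omega>"
    unfolding eqc bas_def using c1 by auto
  finally show ?thesis .
qed

definition Fq :: "nat \<Rightarrow> nat \<Rightarrow> bool list \<Rightarrow> qstate \<Rightarrow> qop \<Rightarrow> qstate" where
  "Fq n m x = (\<lambda>\<psi> U. qapply n m U (qoracle x \<psi>))"

lemma iterate:
  assumes "K \<le> n" "n \<ge> 1" "i \<le> t"
  shows "foldl (Fq n (mm n t) x) (dsumq (Om n t K) c (bas x n t 0)) (map (\<lambda>i. permU n (mm n t) (piq n t i)) [0..<i])
         = dsumq (Om n t K) c (bas x n t i)"
  using assms(3)
proof (induction i)
  case 0 then show ?case by simp
next
  case (Suc i)
  then have it: "i < t" by simp
  have "foldl (Fq n (mm n t) x) (dsumq (Om n t K) c (bas x n t 0)) (map (\<lambda>i. permU n (mm n t) (piq n t i)) [0..<Suc i])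
      = qapply n (mm n t) (permU n (mm n t) (piq n t i)) (qoracle x (dsumq (Om n t K) c (bas x n t i)))"
    using Suc by (simp add: Fq_def)
  also have "\<dots> = dsumq (Om n t K) c (piq n t i \<circ> (flipq x \<circ> bas x n t i))"
    unfolding qoracle_dsumq
    by (rule qapply_permU_dsumq) (use bas_in[OF _ assms(1,2)] it piq_in[OF it] in auto)
  also have "\<dots> = dsumq (Om n t K) c (bas x n t (Suc i))"
    by (rule dsumq_cong) (use step[OF _ assms(1,2) it] in auto)
  finally show ?case .
qed


definition sgnb :: "bool \<Rightarrow> real" where "sgnb b = (if b then -1 else 1)"

definition c0 :: "nat \<Rightarrow> nat \<Rightarrow> nat \<Rightarrow> real" where
  "c0 n t K = 1 / sqrt (real (card (Om n t K)))"

definition cr :: "nat \<Rightarrow> nat \<Rightarrow> nat \<Rightarrow> nat list \<times> nat \<times> bool \<Rightarrow> real" where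
  "cr n t K \<omega> = c0 n t K * sgnb (snd (snd \<omega>))"

definition w0 :: "nat \<Rightarrow> nat \<Rightarrow> nat \<Rightarrow> qbasis \<Rightarrow> real" where
  "w0 n t K s = (\<Sum>\<omega>\<in>Om n t K. if bas [] n t 0 \<omega> = s then cr n t K \<omega> else 0)"

lemma bas0_indep: "bas x n t 0 \<omega> = bas [] n t 0 \<omega>"
  unfolding bas_def cellsAt_def by simp

lemma bas0_inj:
  assumes "t \<ge> 1" "K \<le> n" "n \<ge> 1"
  shows "inj_on (bas [] n t 0) (Om n t K)"
proof (rule inj_onI)
  fix \<omega> \<omega>' assume o: "\<omega> \<in> Om n t K" "\<omega>' \<in> Om n t K" and eq: "bas [] n t 0 \<omega> = bas [] n t 0 \<omega>'"
  have W: "cellsAt [] t 0 \<omega> \<in> Wset n t" "cellsAt [] t 0 \<omega>' \<in> Wset n t"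
    using cellsAt_W[OF o(1) assms(2,3)] cellsAt_W[OF o(2) assms(2,3)] by auto
  have e1: "fst \<omega> ! 0 = fst \<omega>' ! 0" using eq assms(1) unfolding bas_def by simp
  have "enc n t (cellsAt [] t 0 \<omega>) = enc n t (cellsAt [] t 0 \<omega>')" using eq unfolding bas_def by simp
  then have ce: "cellsAt [] t 0 \<omega> = cellsAt [] t 0 \<omega>'" using enc_eq_iff[OF W] by simp
  have lens: "length (fst \<omega>) = t" "length (fst \<omega>') = t" using o unfolding Om_mem by auto
  have J: "fst \<omega> = fst \<omega>'"
  proof (rule nth_equalityI)
    show "length (fst \<omega>) = length (fst \<omega>')" using lens by simp
    fix c assume c: "c < length (fst \<omega>)"
    show "fst \<omega> ! c = fst \<omega>' ! c"
    proof (cases "c = 0")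
      case True then show ?thesis using e1 by simp
    next
      case False
      have "cellsAt [] t 0 \<omega> ! c = cellsAt [] t 0 \<omega>' ! c" using ce by simp
      then show ?thesis using nth_cellsAt[of c t "[]" 0 \<omega>] nth_cellsAt[of c t "[]" 0 \<omega>'] c lens False by simp
    qed
  qed
  have "cellsAt [] t 0 \<omega> ! t = cellsAt [] t 0 \<omega>' ! t" using ce by simp
  then have "snd \<omega> = snd \<omega>'" using nth_cellsAt[of t t "[]" 0 \<omega>] nth_cellsAt[of t t "[]" 0 \<omega>'] assms(1)
    by (simp add: prod_eq_iff)
  then show "\<omega> = \<omega>'" using J by (simp add: prod_eq_iff)
qed

lemma card_Om_pos: "n \<ge> 1 \<Longrightarrow> K \<ge> 1 \<Longrightarrow> card (Om n t K) \<ge> 2"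
  unfolding card_Om by simp

lemma c0_sq: "n \<ge> 1 \<Longrightarrow> K \<ge> 1 \<Longrightarrow> (c0 n t K)^2 = 1 / real (card (Om n t K))"
  unfolding c0_def by (simp add: power_divide)

lemma c0_lt1: "n \<ge> 1 \<Longrightarrow> K \<ge> 1 \<Longrightarrow> c0 n t K < 1"
proof -
  assume a: "n \<ge> 1" "K \<ge> 1"
  have "real (card (Om n t K)) \<ge> 2" using card_Om_pos[OF a] by simp
  then have "sqrt (real (card (Om n t K))) > 1" by simp
  then show ?thesis unfolding c0_def by simp
qed

lemma c0_pos: "n \<ge> 1 \<Longrightarrow> K \<ge> 1 \<Longrightarrow> c0 n t K > 0"
  unfolding c0_def using card_Om_pos[of n K t] by simp

lemma abs_sgnb[simp]: "\<bar>sgnb b\<bar> = 1" unfolding sgnb_def by simp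
lemma sgnb_sq[simp]: "sgnb b * sgnb b = 1" unfolding sgnb_def by simp

context
  fixes n t K :: nat
  assumes t1: "t \<ge> 1" and Kn: "K \<le> n" and K1: "K \<ge> 1"
begin

lemma n1: "n \<ge> 1" using Kn K1 by simp

lemma w0_bas: "\<omega> \<in> Om n t K \<Longrightarrow> w0 n t K (bas [] n t 0 \<omega>) = cr n t K \<omega>"
proof -
  assume o: "\<omega> \<in> Om n t K"
  have "w0 n t K (bas [] n t 0 \<omega>) = (\<Sum>\<omega>'\<in>Om n t K. if \<omega>' = \<omega> then cr n t K \<omega>' else 0)"
    unfolding w0_def using inj_onD[OF bas0_inj[OF t1 Kn n1]] o by (intro sum.cong) auto
  also have "\<dots> = cr n t K \<omega>" using o by (simp add: sum.delta')
  finally show ?thesis .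
qed

lemma w0_out: "s \<notin> bas [] n t 0 ` Om n t K \<Longrightarrow> w0 n t K s = 0"
  unfolding w0_def by (intro sum.neutral) auto

lemma w0_norm: "(\<Sum>s\<in>qspace n (mm n t). (w0 n t K s)^2) = 1"
proof -
  have sub: "bas [] n t 0 ` Om n t K \<subseteq> qspace n (mm n t)" using bas_in[OF _ Kn n1] by auto
  have "(\<Sum>s\<in>qspace n (mm n t). (w0 n t K s)^2) = (\<Sum>s\<in>bas [] n t 0 ` Om n t K. (w0 n t K s)^2)"
    by (rule sum.mono_neutral_right) (use sub w0_out in auto)
  also have "\<dots> = (\<Sum>\<omega>\<in>Om n t K. (w0 n t K (bas [] n t 0 \<omega>))^2)"
    by (simp add: sum.reindex[OF bas0_inj[OF t1 Kn n1]])
  also have "\<dots> = (\<Sum>\<omega>\<in>Om n t K. (c0 n t K)^2)"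
    by (rule sum.cong[OF refl]) (simp add: w0_bas cr_def power_mult_distrib power2_eq_square[of "sgnb _"])
  also have "\<dots> = 1"
  proof -
    have "card (Om n t K) \<ge> 2" using card_Om_pos[OF n1 K1, of t] .
    then have "Om n t K \<noteq> {}" by auto
    then show ?thesis using c0_sq[OF n1 K1, of t] \<open>card (Om n t K) \<ge> 2\<close> by simp
  qed
  finally show ?thesis .
qed

lemma w0_ne1: "w0 n t K s \<noteq> 1"
proof (cases "s \<in> bas [] n t 0 ` Om n t K")
  case True
  then obtain \<omega> where "\<omega> \<in> Om n t K" "s = bas [] n t 0 \<omega>" by auto
  then have "\<bar>w0 n t K s\<bar> = c0 n t K" using w0_bas c0_pos[OF n1 K1, of t] by (simp add: cr_def abs_mult)
  then show ?thesis using c0_lt1[OF n1 K1, of t] by auto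
next
  case False then show ?thesis using w0_out by simp
qed

lemma e0_in: "e0 \<in> qspace n (mm n t)"
  unfolding e0_def using n1 mm_pos[OF n1, of t] by simp

lemma U0_unitary: "is_unitary n (mm n t) (hhU n (mm n t) (w0 n t K))"
  using householder(1)[OF e0_in w0_norm w0_ne1] .

lemma U0_init: "qapply n (mm n t) (hhU n (mm n t) (w0 n t K)) qinit
   = dsumq (Om n t K) (\<lambda>\<omega>. complex_of_real (cr n t K \<omega>)) (bas x n t 0)"
proof -
  have "qapply n (mm n t) (hhU n (mm n t) (w0 n t K)) qinit = (\<lambda>s. if s \<in> qspace n (mm n t) then complex_of_real (w0 n t K s) else 0)"
    using householder(2)[OF e0_in w0_norm w0_ne1] .
  also have "\<dots> = dsumq (Om n t K) (\<lambda>\<omega>. complex_of_real (cr n t K \<omega>)) (bas x n t 0)"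
  proof (rule ext)
    fix s
    show "(if s \<in> qspace n (mm n t) then complex_of_real (w0 n t K s) else 0) = dsumq (Om n t K) (\<lambda>\<omega>. complex_of_real (cr n t K \<omega>)) (bas x n t 0) s"
    proof (cases "s \<in> qspace n (mm n t)")
      case True
      then show ?thesis unfolding dsumq_def w0_def bas0_indep[of x] by (simp add: of_real_sum if_distrib cong: if_cong)
    next
      case False
      have "\<And>\<omega>. \<omega> \<in> Om n t K \<Longrightarrow> bas x n t 0 \<omega> \<noteq> s" using bas_in[OF _ Kn n1] False by blast
      then show ?thesis using False unfolding dsumq_def by (simp add: sum.neutral)
    qed
  qed
  finally show ?thesis .
qed

end


definition Usq :: "nat \<Rightarrow> nat \<Rightarrow> nat \<Rightarrow> qop list" where
  "Usq n t r = map (\<lambda>i. permU n (mm n t) (piq n t i)) [0..<t] @ [hU n (mm n t) (2*r)]"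

definition U0q :: "nat \<Rightarrow> nat \<Rightarrow> nat \<Rightarrow> qop" where
  "U0q n t r = hhU n (mm n t) (w0 n t (4^r))"

definition cellsF :: "bool list \<Rightarrow> nat \<Rightarrow> nat list \<Rightarrow> (nat \<times> bool) list" where
  "cellsF x t J = map (\<lambda>c. if c < t then (J ! c, oracle_bit x (J ! c)) else (0, False)) [0..<Suc t]"

lemma cellsAt_t: "cellsAt x t t \<omega> = cellsF x t (fst \<omega>)"
  unfolding cellsAt_def cellsF_def by (rule map_cong) auto

lemma flipq_bas_t: "flipq x (bas x n t t \<omega>) = (fst (snd \<omega>), snd (snd \<omega>) \<noteq> oracle_bit x (fst (snd \<omega>)), enc n t (cellsF x t (fst \<omega>)))"
  unfolding bas_def flipq_def cellsAt_t by simp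

context
  fixes n t r :: nat
  assumes t1: "t \<ge> 1" and Kn: "4^r \<le> n"
begin

lemma K1: "(4::nat)^r \<ge> 1" by simp
lemma nn1: "n \<ge> 1" using Kn K1 by linarith

lemma qfinal_eq:
  "qfinal n (mm n t) (U0q n t r) (Usq n t r) x =
   (\<lambda>s. if s \<in> qspace n (mm n t) then
      (\<Sum>\<omega>\<in>Om n t (4^r). complex_of_real (cr n t (4^r) \<omega>) * hU n (mm n t) (2*r) s (flipq x (bas x n t t \<omega>))) else 0)"
proof -
  let ?c = "\<lambda>\<omega>. complex_of_real (cr n t (4^r) \<omega>)"
  have "qfinal n (mm n t) (U0q n t r) (Usq n t r) x
     = Fq n (mm n t) x (foldl (Fq n (mm n t) x) (dsumq (Om n t (4^r)) ?c (bas x n t 0)) (map (\<lambda>i. permU n (mm n t) (piq n t i)) [0..<t])) (hU n (mm n t) (2*r))"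
    unfolding qfinal_def Usq_def U0q_def U0_init[OF t1 Kn K1, where x=x] Fq_def[symmetric] by simp
  also have "\<dots> = Fq n (mm n t) x (dsumq (Om n t (4^r)) ?c (bas x n t t)) (hU n (mm n t) (2*r))"
    using iterate[OF Kn nn1, of t t x ?c] by simp
  also have "\<dots> = qapply n (mm n t) (hU n (mm n t) (2*r)) (dsumq (Om n t (4^r)) ?c (flipq x \<circ> bas x n t t))"
    unfolding Fq_def qoracle_dsumq ..
  also have "\<dots> = (\<lambda>s. if s \<in> qspace n (mm n t) then
      (\<Sum>\<omega>\<in>Om n t (4^r). ?c \<omega> * hU n (mm n t) (2*r) s ((flipq x \<circ> bas x n t t) \<omega>)) else 0)"
    by (rule qapply_dsumq) (use bas_in[OF _ Kn nn1] in auto)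
  also have "\<dots> = (\<lambda>s. if s \<in> qspace n (mm n t) then
      (\<Sum>\<omega>\<in>Om n t (4^r). ?c \<omega> * hU n (mm n t) (2*r) s (flipq x (bas x n t t \<omega>))) else 0)"
    by (intro ext if_cong refl sum.cong) simp
  finally show ?thesis .
qed

end


lemma sum_Om: "(\<Sum>\<omega>\<in>Om n t K. g \<omega>) = (\<Sum>J\<in>Jset n t. \<Sum>j0<K. g (J, j0, True) + g (J, j0, False))"
proof -
  have "(\<Sum>\<omega>\<in>Om n t K. g \<omega>) = (\<Sum>J\<in>Jset n t. \<Sum>p\<in>{..<K} \<times> (UNIV::bool set). g (J, p))"
    unfolding Om_def by (subst sum.cartesian_product) (simp add: case_prod_beta')
  also have "\<dots> = (\<Sum>J\<in>Jset n t. \<Sum>j0<K. \<Sum>\<beta>\<in>(UNIV::bool set). g (J, j0, \<beta>))"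
    by (rule sum.cong[OF refl]) (subst sum.cartesian_product, simp add: case_prod_beta')
  also have "\<dots> = (\<Sum>J\<in>Jset n t. \<Sum>j0<K. g (J, j0, True) + g (J, j0, False))"
    by (simp add: UNIV_bool add.commute)
  finally show ?thesis .
qed

definition Fa :: "bool list \<Rightarrow> nat \<Rightarrow> nat \<Rightarrow> real" where
  "Fa x r a = (\<Sum>j<4^r. sgnb (oracle_bit x j) * chi (2*r) a j)"

definition indz :: "bool list \<Rightarrow> nat \<Rightarrow> nat \<Rightarrow> nat \<Rightarrow> real" where
  "indz x n t z = (\<Sum>J\<in>Jset n t. if z = enc n t (cellsF x t J) then 1 else 0)"

lemma two_pow_four: "(2::nat)^(2*r) = 4^r" by (simp add: power_mult)
lemma two_pow_four_r: "(2::real)^(2*r) = 4^r" by (simp add: power_mult)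

context
  fixes n t r :: nat
  assumes t1: "t \<ge> 1" and Kn: "4^r \<le> n"
begin

lemma final_val:
  assumes a: "a < 4^r" and s: "(a, b, z) \<in> qspace n (mm n t)"
  shows "(\<Sum>\<omega>\<in>Om n t (4^r). complex_of_real (cr n t (4^r) \<omega>) * hU n (mm n t) (2*r) (a, b, z) (flipq x (bas x n t t \<omega>)))
     = complex_of_real (indz x n t z * (c0 n t (4^r) * sgnb b * Fa x r a / sqrt (4^r)))"
proof -
  let ?K = "4^r::nat"
  let ?g = "\<lambda>\<omega>. cr n t ?K \<omega> * (if b = (snd (snd \<omega>) \<noteq> oracle_bit x (fst (snd \<omega>))) \<and> z = enc n t (cellsF x t (fst \<omega>))
      then hh1 (2*r) a (fst (snd \<omega>)) else 0)"
  have n1: "n \<ge> 1" using Kn by (metis one_le_numeral one_le_power order_trans)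
  have "(\<Sum>\<omega>\<in>Om n t ?K. complex_of_real (cr n t ?K \<omega>) * hU n (mm n t) (2*r) (a, b, z) (flipq x (bas x n t t \<omega>)))
      = (\<Sum>\<omega>\<in>Om n t ?K. complex_of_real (?g \<omega>))"
  proof (rule sum.cong[OF refl])
    fix \<omega> assume o: "\<omega> \<in> Om n t ?K"
    have "flipq x (bas x n t t \<omega>) \<in> qspace n (mm n t)" using bas_in[OF o Kn n1] by simp
    then show "complex_of_real (cr n t ?K \<omega>) * hU n (mm n t) (2*r) (a, b, z) (flipq x (bas x n t t \<omega>)) = complex_of_real (?g \<omega>)"
      unfolding hU_def flipq_bas_t using s by (auto simp: flipq_bas_t)
  qed
  also have "\<dots> = complex_of_real (\<Sum>\<omega>\<in>Om n t ?K. ?g \<omega>)" by (simp only: of_real_sum)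
  also have "(\<Sum>\<omega>\<in>Om n t ?K. ?g \<omega>) = (\<Sum>J\<in>Jset n t. \<Sum>j0<?K. ?g (J, j0, True) + ?g (J, j0, False))"
    by (rule sum_Om)
  also have "\<dots> = (\<Sum>J\<in>Jset n t. \<Sum>j0<?K. if z = enc n t (cellsF x t J) then
        c0 n t ?K * sgnb b * (sgnb (oracle_bit x j0) * chi (2*r) a j0) / sqrt ?K else 0)"
  proof (intro sum.cong refl)
    fix J j0 assume j0: "j0 \<in> {..<?K}"
    have h: "hh1 (2*r) a j0 = chi (2*r) a j0 / sqrt ?K" using a j0 unfolding hh1_def two_pow_four two_pow_four_r by simp
    show "?g (J, j0, True) + ?g (J, j0, False) = (if z = enc n t (cellsF x t J) then
        c0 n t ?K * sgnb b * (sgnb (oracle_bit x j0) * chi (2*r) a j0) / sqrt ?K else 0)"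
      by (cases b; cases "oracle_bit x j0") (auto simp: h cr_def sgnb_def)
  qed
  also have "\<dots> = (\<Sum>J\<in>Jset n t. if z = enc n t (cellsF x t J) then c0 n t ?K * sgnb b * Fa x r a / sqrt ?K else 0)"
    unfolding Fa_def by (intro sum.cong refl) (auto simp: sum_distrib_left sum_divide_distrib)
  also have "\<dots> = indz x n t z * (c0 n t ?K * sgnb b * Fa x r a / sqrt ?K)"
    unfolding indz_def sum_distrib_right by (intro sum.cong refl) simp
  finally show ?thesis by simp
qed

end


definition chk :: "nat \<Rightarrow> nat \<Rightarrow> nat \<Rightarrow> (nat \<times> bool) list \<Rightarrow> bool" where
  "chk r t a cs = (\<forall>c<t. snd (cs!c) = (chi (2*r) a (fst (cs!c) mod 4^r) = -1))"

definition Aset :: "nat \<Rightarrow> nat \<Rightarrow> nat \<Rightarrow> qbasis set" where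
  "Aset n t r = {s \<in> qspace n (mm n t). fst s < 4^r \<and> G r (fst s) = 1 \<and> chk r t (fst s) (dec n t (snd (snd s)))}"

definition Nag :: "bool list \<Rightarrow> nat \<Rightarrow> nat \<Rightarrow> nat \<Rightarrow> nat" where
  "Nag x r n a = card {j. j < n \<and> oracle_bit x j = (chi (2*r) a (j mod 4^r) = -1)}"

lemma sum_qspace: "(\<Sum>s\<in>qspace n m. h s) = (\<Sum>a<n. \<Sum>b\<in>(UNIV::bool set). \<Sum>z<m. h (a, b, z))"
  unfolding qspace_def by (simp add: sum.cartesian_product')

lemma cellsF_W: "J \<in> Jset n t \<Longrightarrow> n \<ge> 1 \<Longrightarrow> cellsF x t J \<in> Wset n t"
  unfolding Wset_def cellsF_def Jset_def by (auto simp: subset_iff)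

lemma cellsF_inj: "J \<in> Jset n t \<Longrightarrow> J' \<in> Jset n t \<Longrightarrow> cellsF x t J = cellsF x t J' \<Longrightarrow> J = J'"
proof -
  assume J: "J \<in> Jset n t" "J' \<in> Jset n t" and eq: "cellsF x t J = cellsF x t J'"
  show "J = J'"
  proof (rule nth_equalityI)
    show "length J = length J'" using J unfolding Jset_def by simp
    fix c assume "c < length J"
    then have c: "c < t" using J unfolding Jset_def by simp
    have "cellsF x t J ! c = cellsF x t J' ! c" using eq by simp
    then show "J ! c = J' ! c" using c unfolding cellsF_def by (simp del: upt_Suc add: nth_map_upt)
  qed
qed

lemma nth_cellsF: "c < t \<Longrightarrow> cellsF x t J ! c = (J ! c, oracle_bit x (J ! c))"
  unfolding cellsF_def by (simp del: upt_Suc add: nth_map_upt)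

context
  fixes n t r :: nat
  assumes t1: "t \<ge> 1" and Kn: "4^r \<le> n"
begin

lemma n1': "n \<ge> 1" using Kn by (metis one_le_numeral one_le_power order_trans)

lemma indz_sq: "indz x n t z * indz x n t z = indz x n t z"
proof (cases "\<exists>J0\<in>Jset n t. z = enc n t (cellsF x t J0)")
  case True
  then obtain J0 where J0: "J0 \<in> Jset n t" "z = enc n t (cellsF x t J0)" by blast
  have "indz x n t z = (\<Sum>J\<in>Jset n t. if J = J0 then 1 else 0)"
    unfolding indz_def
  proof (intro sum.cong refl)
    fix J assume J: "J \<in> Jset n t"
    have "(z = enc n t (cellsF x t J)) = (J = J0)"
      using J0 J enc_eq_iff[OF cellsF_W[OF J n1', of x] cellsF_W[OF J0(1) n1', of x]] cellsF_inj[OF J J0(1), of x] by auto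
    then show "(if z = enc n t (cellsF x t J) then 1 else 0) = (if J = J0 then 1 else (0::real))" by simp
  qed
  also have "\<dots> = 1" using J0 by (simp add: sum.delta')
  finally show ?thesis by simp
next
  case False
  then have "indz x n t z = 0" unfolding indz_def by (intro sum.neutral) auto
  then show ?thesis by simp
qed

lemma cmod_final:
  assumes "s \<in> Aset n t r"
  shows "(cmod (qfinal n (mm n t) (U0q n t r) (Usq n t r) x s))^2
     = indz x n t (snd (snd s)) * ((c0 n t (4^r))^2 * (Fa x r (fst s))^2 / 4^r)"
proof -
  obtain a b z where s: "s = (a, b, z)" by (cases s) auto
  have sQ: "(a,b,z) \<in> qspace n (mm n t)" and a: "a < 4^r" using assms s unfolding Aset_def by auto
  have "qfinal n (mm n t) (U0q n t r) (Usq n t r) x s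
      = complex_of_real (indz x n t z * (c0 n t (4^r) * sgnb b * Fa x r a / sqrt (4^r)))"
    unfolding qfinal_eq[OF t1 Kn] s using sQ final_val[OF t1 Kn a sQ] by simp
  then have "(cmod (qfinal n (mm n t) (U0q n t r) (Usq n t r) x s))^2
      = (indz x n t z * (c0 n t (4^r) * sgnb b * Fa x r a / sqrt (4^r)))^2"
    by (simp only: norm_of_real power2_abs)
  also have "\<dots> = (indz x n t z * indz x n t z) * (c0 n t (4^r))^2 * (sgnb b * sgnb b) * (Fa x r a)^2 / (sqrt (4^r))^2"
    by (simp add: power2_eq_square field_simps)
  also have "\<dots> = indz x n t z * ((c0 n t (4^r))^2 * (Fa x r a)^2 / 4^r)"
    unfolding indz_sq sgnb_sq by simp
  finally show ?thesis using s by simp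
qed

lemma count_chk:
  "card {J \<in> Jset n t. chk r t a (cellsF x t J)} = Nag x r n a ^ t"
proof -
  have "{J \<in> Jset n t. chk r t a (cellsF x t J)} =
        {J. set J \<subseteq> {j. j < n \<and> oracle_bit x j = (chi (2*r) a (j mod 4^r) = -1)} \<and> length J = t}"
  proof (rule set_eqI)
    fix J
    show "J \<in> {J \<in> Jset n t. chk r t a (cellsF x t J)} \<longleftrightarrow>
          J \<in> {J. set J \<subseteq> {j. j < n \<and> oracle_bit x j = (chi (2*r) a (j mod 4^r) = -1)} \<and> length J = t}"
      unfolding Jset_def chk_def
      by (auto simp: nth_cellsF subset_iff in_set_conv_nth)
  qed
  then show ?thesis unfolding Nag_def by (simp add: card_lists_length_eq)
qed

lemma acc_formula:
  "qaccept_prob n (mm n t) (U0q n t r) (Usq n t r) (Aset n t r) x =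
   (\<Sum>a<4^r. if G r a = 1 then (Fa x r a / 4^r)^2 * (real (Nag x r n a) / n)^t else 0)"
proof -
  let ?K = "4^r::nat"
  let ?m = "mm n t"
  define Y where "Y a = (c0 n t ?K)^2 * (Fa x r a)^2 / ?K" for a
  let ?P = "\<lambda>s. fst s < ?K \<and> G r (fst s) = 1 \<and> chk r t (fst s) (dec n t (snd (snd s)))"
  have "qaccept_prob n ?m (U0q n t r) (Usq n t r) (Aset n t r) x = (\<Sum>s\<in>Aset n t r. indz x n t (snd (snd s)) * Y (fst s))"
    unfolding qaccept_prob_def Y_def by (intro sum.cong refl) (simp add: cmod_final)
  also have "\<dots> = (\<Sum>s\<in>qspace n ?m. if ?P s then indz x n t (snd (snd s)) * Y (fst s) else 0)"
    unfolding Aset_def by (rule sum.inter_filter) simp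
  also have "\<dots> = (\<Sum>a<n. \<Sum>b\<in>(UNIV::bool set). \<Sum>z<?m. if ?P (a,b,z) then indz x n t z * Y a else 0)"
    by (subst sum_qspace) (simp only: fst_conv snd_conv)
  also have "\<dots> = (\<Sum>a<n. if a < ?K \<and> G r a = 1 then 2 * Y a * real (Nag x r n a ^ t) else 0)"
  proof (intro sum.cong refl)
    fix a assume "a \<in> {..<n}"
    have inner: "(\<Sum>z<?m. if chk r t a (dec n t z) then indz x n t z else 0) = real (Nag x r n a ^ t)"
    proof -
      have "(\<Sum>z<?m. if chk r t a (dec n t z) then indz x n t z else 0)
          = (\<Sum>z<?m. \<Sum>J\<in>Jset n t. if z = enc n t (cellsF x t J) then (if chk r t a (cellsF x t J) then 1 else 0) else 0)"
      proof (intro sum.cong refl)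
        fix z
        have "(if chk r t a (dec n t z) then indz x n t z else 0)
           = (\<Sum>J\<in>Jset n t. if chk r t a (dec n t z) then (if z = enc n t (cellsF x t J) then 1 else 0) else 0)"
          unfolding indz_def by (cases "chk r t a (dec n t z)") simp_all
        also have "\<dots> = (\<Sum>J\<in>Jset n t. if z = enc n t (cellsF x t J) then (if chk r t a (cellsF x t J) then 1 else 0) else 0)"
        proof (intro sum.cong refl)
          fix J assume J: "J \<in> Jset n t"
          show "(if chk r t a (dec n t z) then (if z = enc n t (cellsF x t J) then 1 else 0) else 0)
              = (if z = enc n t (cellsF x t J) then (if chk r t a (cellsF x t J) then 1 else 0) else (0::real))"
            using dec_enc[OF cellsF_W[OF J n1', of x]] by auto
        qed
        finally show "(if chk r t a (dec n t z) then indz x n t z else 0)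
           = (\<Sum>J\<in>Jset n t. if z = enc n t (cellsF x t J) then (if chk r t a (cellsF x t J) then 1 else 0) else 0)" .
      qed
      also have "\<dots> = (\<Sum>J\<in>Jset n t. \<Sum>z<?m. if z = enc n t (cellsF x t J) then (if chk r t a (cellsF x t J) then 1 else 0) else 0)"
        by (rule sum.swap)
      also have "\<dots> = (\<Sum>J\<in>Jset n t. if chk r t a (cellsF x t J) then 1 else 0)"
        by (intro sum.cong refl) (auto simp: sum.delta' enc_lt[OF cellsF_W[OF _ n1']])
      also have "\<dots> = real (card {J \<in> Jset n t. chk r t a (cellsF x t J)})"
        by (simp add: sum.If_cases Int_def conj_commute)
      finally show ?thesis using count_chk by simp
    qed
    show "(\<Sum>b\<in>(UNIV::bool set). \<Sum>z<?m. if ?P (a,b,z) then indz x n t z * Y a else 0)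
        = (if a < ?K \<and> G r a = 1 then 2 * Y a * real (Nag x r n a ^ t) else 0)"
    proof (cases "a < ?K \<and> G r a = 1")
      case True
      have "(\<Sum>z<?m. if ?P (a,b,z) then indz x n t z * Y a else 0) = Y a * real (Nag x r n a ^ t)" for b
        using True inner[symmetric] by (simp add: sum_distrib_left if_distrib mult.commute cong: if_cong)
      then show ?thesis using True by (simp add: UNIV_bool)
    next
      case False
      then have "\<And>b z. \<not> ?P (a,b,z)" by auto
      then have "(\<Sum>b\<in>(UNIV::bool set). \<Sum>z<?m. if ?P (a,b,z) then indz x n t z * Y a else 0) = 0"
        by (intro sum.neutral ballI) auto
      moreover have "(if a < ?K \<and> G r a = 1 then 2 * Y a * real (Nag x r n a ^ t) else 0) = 0"
        using False by (simp only: if_False)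
      ultimately show ?thesis by simp
    qed
  qed
  also have "\<dots> = (\<Sum>a<?K. if G r a = 1 then 2 * Y a * real (Nag x r n a ^ t) else 0)"
  proof -
    have "(\<Sum>a<n. if a < ?K \<and> G r a = 1 then 2 * Y a * real (Nag x r n a ^ t) else 0)
        = (\<Sum>a<?K. if a < ?K \<and> G r a = 1 then 2 * Y a * real (Nag x r n a ^ t) else 0)"
      by (rule sum.mono_neutral_right) (use Kn in auto)
    then show ?thesis by simp
  qed
  also have "\<dots> = (\<Sum>a<?K. if G r a = 1 then (Fa x r a / ?K)^2 * (real (Nag x r n a) / n)^t else 0)"
  proof (intro sum.cong refl if_cong)
    fix a
    have cs: "(c0 n t ?K)^2 = 1 / (real n ^ t * real ?K * 2)"
      using c0_sq[OF n1', of ?K t] card_Om[of n t ?K] by simp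
    have np: "real n > 0" using n1' by simp
    show "2 * Y a * real (Nag x r n a ^ t) = (Fa x r a / ?K)^2 * (real (Nag x r n a) / n)^t"
      unfolding Y_def cs using np by (simp add: field_simps power_divide power2_eq_square)
  qed
  finally show ?thesis by (simp only: of_nat_power of_nat_numeral)
qed

end


lemma sgnb_chi: "sgnb (chi k a j = -1) = chi k a j"
  using chi_cases[of k a j] unfolding sgnb_def by auto

lemma parseval: "(\<Sum>a<4^r. (Fa x r a)^2) = (4^r)^2"
proof -
  let ?K = "4^r::nat"
  let ?f = "\<lambda>j. sgnb (oracle_bit x j)"
  have "(\<Sum>a<?K. (Fa x r a)^2) = (\<Sum>a<?K. \<Sum>j<?K. \<Sum>j'<?K. ?f j * ?f j' * chi (2*r) a (xor j j'))"
  proof (intro sum.cong refl)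
    fix a
    have "(Fa x r a)^2 = (\<Sum>j<?K. \<Sum>j'<?K. (?f j * chi (2*r) a j) * (?f j' * chi (2*r) a j'))"
      unfolding Fa_def power2_eq_square by (simp add: sum_product)
    also have "\<dots> = (\<Sum>j<?K. \<Sum>j'<?K. ?f j * ?f j' * chi (2*r) a (xor j j'))"
    proof (intro sum.cong refl)
      fix j j'
      have "chi (2*r) a (xor j j') = chi (2*r) a j * chi (2*r) a j'" by (metis chi_sym chi_xor)
      then show "(?f j * chi (2*r) a j) * (?f j' * chi (2*r) a j') = ?f j * ?f j' * chi (2*r) a (xor j j')"
        by simp
    qed
    finally show "(Fa x r a)^2 = (\<Sum>j<?K. \<Sum>j'<?K. ?f j * ?f j' * chi (2*r) a (xor j j'))" .
  qed
  also have "\<dots> = (\<Sum>j<?K. \<Sum>a<?K. \<Sum>j'<?K. ?f j * ?f j' * chi (2*r) a (xor j j'))"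
    by (rule sum.swap)
  also have "\<dots> = (\<Sum>j<?K. \<Sum>j'<?K. \<Sum>a<?K. ?f j * ?f j' * chi (2*r) a (xor j j'))"
    by (intro sum.cong refl sum.swap)
  also have "\<dots> = (\<Sum>j<?K. \<Sum>j'<?K. ?f j * ?f j' * (\<Sum>a<?K. chi (2*r) a (xor j j')))"
    by (intro sum.cong refl) (simp only: sum_distrib_left)
  also have "\<dots> = (\<Sum>j<?K. \<Sum>j'<?K. if j' = j then real ?K else 0)"
  proof (intro sum.cong refl)
    fix j j' assume j: "j \<in> {..<?K}" and j': "j' \<in> {..<?K}"
    have u: "xor j j' < 2^(2*r)" using xor_lt4[of j r j'] j j' two_pow_four by auto
    have "(\<Sum>a<?K. chi (2*r) a (xor j j')) = (if xor j j' = 0 then real ?K else 0)"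
      using char_sum[OF u] unfolding two_pow_four two_pow_four_r by simp
    moreover have "(xor j j' = 0) = (j' = j)" using xor_neq0[of j j'] by (cases "j = j'") auto
    ultimately show "?f j * ?f j' * (\<Sum>a<?K. chi (2*r) a (xor j j')) = (if j' = j then real ?K else 0)"
      by (auto simp: sgnb_def)
  qed
  also have "\<dots> = real ?K * real ?K" by (simp add: sum.delta)
  finally show ?thesis by (simp add: power2_eq_square)
qed

lemma Fa_code:
  assumes "4^r \<le> n" "s < 4^r" "x = codeR r n s"
  shows "Fa x r s = 4^r"
proof -
  have "Fa x r s = (\<Sum>j<(4::nat)^r. (1::real))"
    unfolding Fa_def
  proof (intro sum.cong refl)
    fix j assume j: "j \<in> {..<(4::nat)^r}"
    then have "j < n" using assms by auto
    then have "oracle_bit x j = (chi (2*r) s j = -1)" using j assms(3) by (simp add: oracle_codeR uq_def)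
    then show "sgnb (oracle_bit x j) * chi (2*r) s j = 1" using chi_cases[of "2*r" s j] by (auto simp: sgnb_def)
  qed
  then show ?thesis by simp
qed

lemma Nag_code:
  assumes "x = codeR r n s"
  shows "Nag x r n s = n"
proof -
  have "{j. j < n \<and> oracle_bit x j = (chi (2*r) s (j mod 4^r) = -1)} = {..<n}"
    using assms by (auto simp: oracle_codeR uq_def)
  then show ?thesis unfolding Nag_def by simp
qed

lemma Nag_hamming:
  assumes "length x = n"
  shows "Nag x r n a + hamming x (codeR r n a) = n"
proof -
  let ?A = "{j. j < n \<and> oracle_bit x j = (chi (2*r) a (j mod 4^r) = -1)}"
  let ?B = "{i. i < length x \<and> x ! i \<noteq> codeR r n a ! i}"
  have B: "?B = {j. j < n \<and> \<not> (oracle_bit x j = (chi (2*r) a (j mod 4^r) = -1))}"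
    using assms by (auto simp: nth_codeR oracle_bit_def)
  have "?A \<union> ?B = {..<n}" unfolding B by auto
  moreover have "?A \<inter> ?B = {}" unfolding B by auto
  moreover have "finite ?A" "finite ?B" by auto
  ultimately have "card ?A + card ?B = n" using card_Un_disjoint[of ?A ?B] by simp
  then show ?thesis unfolding Nag_def hamming_def .
qed

lemma exp_bound: "(1::real) - e \<ge> 0 \<Longrightarrow> e * real t \<ge> 2 \<Longrightarrow> (1 - e)^t \<le> 1/3"
proof -
  assume a: "1 - e \<ge> 0" "e * real t \<ge> 2"
  have "(1 - e)^t \<le> (exp (-e))^t"
    using a(1) exp_ge_add_one_self[of "-e"] by (intro power_mono) auto
  also have "\<dots> = exp (real t * (-e))" by (rule exp_of_nat_mult[symmetric])
  also have "\<dots> \<le> exp (-2)" using a(2) by (simp add: mult.commute)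
  also have "\<dots> = 1 / exp 2" by (simp add: exp_minus field_simps)
  also have "\<dots> \<le> 1/3"
  proof -
    have "(3::real) \<le> exp 2" using exp_ge_add_one_self[of 2] by simp
    then show ?thesis by (simp add: field_simps)
  qed
  finally show ?thesis .
qed

lemma quantum_main:
  assumes n: "n \<ge> 1" and t1: "t \<ge> 1" and e: "0 < eps" "eps < 1" and et: "eps * real t \<ge> 2"
  shows "quantum_tester Lang n eps (Suc t)"
proof -
  let ?r = "rr n"
  let ?K = "4^?r::nat"
  have Kn: "?K \<le> n" using rr_le[OF n] .
  have K1: "?K \<ge> 1" by simp
  show ?thesis
    unfolding quantum_tester_def
  proof (intro exI conjI allI impI)
    show "mm n t \<ge> 1" using mm_pos[OF n] .
    show "length (Usq n t ?r) = Suc t" unfolding Usq_def by simp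
    show "is_unitary n (mm n t) (U0q n t ?r)" unfolding U0q_def by (rule U0_unitary[OF t1 Kn K1])
    show "\<forall>U\<in>set (Usq n t ?r). is_unitary n (mm n t) U"
    proof
      fix U assume "U \<in> set (Usq n t ?r)"
      then consider i where "i < t" "U = permU n (mm n t) (piq n t i)" | "U = hU n (mm n t) (2 * ?r)"
        unfolding Usq_def by auto
      then show "is_unitary n (mm n t) U"
      proof cases
        case 1 then show ?thesis using permU_unitary[OF piq_bij] by simp
      next
        case 2 then show ?thesis using hU_unitary[of "2 * ?r" n] Kn two_pow_four by simp
      qed
    qed
    show "Aset n t ?r \<subseteq> qspace n (mm n t)" unfolding Aset_def by auto
    fix x :: "bool list" assume len: "length x = n"
    have acc: "qaccept_prob n (mm n t) (U0q n t ?r) (Usq n t ?r) (Aset n t ?r) x =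
      (\<Sum>a<?K. if G ?r a = 1 then (Fa x ?r a / (4::real)^?r)^2 * (real (Nag x ?r n a) / n)^t else 0)"
      using acc_formula[OF t1 Kn] by simp
    have nonneg: "\<And>a. 0 \<le> (if G ?r a = 1 then (Fa x ?r a / (4::real)^?r)^2 * (real (Nag x ?r n a) / n)^t else 0)"
      by simp
    {
      assume "x \<in> Lang"
      then obtain s where s: "s < ?K" "G ?r s = 1" "x = codeR ?r n s" unfolding Lang_def using len by auto
      have "(1::real) = (if G ?r s = 1 then (Fa x ?r s / (4::real)^?r)^2 * (real (Nag x ?r n s) / n)^t else 0)"
        using s Fa_code[OF Kn s(1) s(3)] Nag_code[OF s(3)] n by simp
      also have "\<dots> \<le> (\<Sum>a<?K. if G ?r a = 1 then (Fa x ?r a / (4::real)^?r)^2 * (real (Nag x ?r n a) / n)^t else 0)"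
        by (rule member_le_sum) (use s nonneg in auto)
      finally show "qaccept_prob n (mm n t) (U0q n t ?r) (Usq n t ?r) (Aset n t ?r) x \<ge> 2/3"
        unfolding acc by simp
    }
    {
      assume far: "eps_far Lang n eps x"
      have "(\<Sum>a<?K. if G ?r a = 1 then (Fa x ?r a / (4::real)^?r)^2 * (real (Nag x ?r n a) / n)^t else 0)
          \<le> (\<Sum>a<?K. (Fa x ?r a / (4::real)^?r)^2 * (1 - eps)^t)"
      proof (rule sum_mono)
        fix a assume a: "a \<in> {..<?K}"
        show "(if G ?r a = 1 then (Fa x ?r a / (4::real)^?r)^2 * (real (Nag x ?r n a) / n)^t else 0) \<le> (Fa x ?r a / (4::real)^?r)^2 * (1 - eps)^t"
        proof (cases "G ?r a = 1")
          case True
          have "codeR ?r n a \<in> Lang" using code_in_Lang[of a n] a True by simp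
          then have "real (hamming x (codeR ?r n a)) > eps * real n" using far unfolding eps_far_def by simp
          moreover have "real (Nag x ?r n a) + real (hamming x (codeR ?r n a)) = real n"
            using Nag_hamming[OF len, of ?r a] by (metis of_nat_add)
          ultimately have "real (Nag x ?r n a) \<le> (1 - eps) * real n" by (simp add: algebra_simps)
          then have "real (Nag x ?r n a) / n \<le> 1 - eps" using n by (simp add: divide_le_eq)
          then have "(real (Nag x ?r n a) / n)^t \<le> (1 - eps)^t" by (intro power_mono) auto
          then show ?thesis using True by (simp add: mult_left_mono)
        next
          case False then show ?thesis using e by simp
        qed
      qed
      also have "\<dots> = (\<Sum>a<?K. (Fa x ?r a)^2) / ((4::real)^?r)^2 * (1 - eps)^t"
        by (simp add: power_divide sum_divide_distrib sum_distrib_right)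
      also have "\<dots> = (1 - eps)^t" using parseval[where r="?r" and x=x] by simp
      also have "\<dots> \<le> 1/3" using exp_bound[of eps t] e et by simp
      finally show "qaccept_prob n (mm n t) (U0q n t ?r) (Usq n t ?r) (Aset n t ?r) x \<le> 1/3"
        unfolding acc .
    }
  qed
qed

lemma quantum_trivial:
  assumes n: "n \<ge> 1" and e: "eps \<ge> 1"
  shows "quantum_tester Lang n eps 0"
  unfolding quantum_tester_def
proof (intro exI conjI allI impI)
  show "(1::nat) \<ge> 1" by simp
  show "length ([]::qop list) = 0" by simp
  have bij: "bij_betw id (qspace n 1) (qspace n 1)" by simp
  show "is_unitary n 1 (permU n 1 id)" using permU_unitary[OF bij] by simp
  show "\<forall>U\<in>set ([]::qop list). is_unitary n 1 U" by simp
  show "qspace n 1 \<subseteq> qspace n 1" by simp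
  fix x :: "bool list" assume len: "length x = n"
  have fin: "qfinal n 1 (permU n 1 id) [] x = (\<lambda>s. if s \<in> qspace n 1 then qinit s else 0)"
  proof (rule ext)
    fix s
    show "qfinal n 1 (permU n 1 id) [] x s = (if s \<in> qspace n 1 then qinit s else 0)"
    proof (cases "s \<in> qspace n 1")
      case True
      have "(\<Sum>t\<in>qspace n 1. permU n 1 id s t * qinit t) = (\<Sum>t\<in>qspace n 1. if s = t then qinit t else 0)"
        by (intro sum.cong refl) (auto simp: permU_def)
      also have "\<dots> = qinit s" using True by (simp add: sum.delta)
      finally show ?thesis using True by (simp add: qfinal_def qapply_def)
    next
      case False then show ?thesis by (simp add: qfinal_def qapply_def)
    qed
  qed
  have "qaccept_prob n 1 (permU n 1 id) [] (qspace n 1) x = (\<Sum>s\<in>qspace n 1. (cmod (if s = (0, False, 0) then 1 else 0))^2)"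
    unfolding qaccept_prob_def fin qinit_def by (intro sum.cong refl) auto
  also have "\<dots> = (\<Sum>s\<in>qspace n 1. if s = (0, False, 0) then 1 else 0)"
    by (intro sum.cong refl) auto
  also have "\<dots> = 1" using n by (simp add: sum.delta)
  finally have one: "qaccept_prob n 1 (permU n 1 id) [] (qspace n 1) x = 1" .
  show "x \<in> Lang \<Longrightarrow> qaccept_prob n 1 (permU n 1 id) [] (qspace n 1) x \<ge> 2/3" using one by simp
  assume far: "eps_far Lang n eps x"
  have "codeR (rr n) n 0 \<in> Lang" by (rule code_in_Lang) (auto simp: G_def)
  then have "real (hamming x (codeR (rr n) n 0)) > eps * real n" using far unfolding eps_far_def by simp
  moreover have "hamming x (codeR (rr n) n 0) \<le> n"
    unfolding hamming_def using len by (metis (no_types, lifting) card_lessThan card_mono finite_lessThan lessThan_iff mem_Collect_eq subsetI)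
  moreover have "eps * real n \<ge> real n" using e by (simp add: mult_right_mono[of 1 eps "real n", simplified])
  ultimately show "qaccept_prob n 1 (permU n 1 id) [] (qspace n 1) x \<le> 1/3" by linarith
qed

lemma quantum_part:
  "\<exists>C > 0. \<forall>eps > 0. \<forall>n \<ge> 1. \<exists>q. real q \<le> C / eps \<and> quantum_tester Lang n eps q"
proof (rule exI[of _ "4::real"], intro conjI allI impI)
  show "(0::real) < 4" by simp
  fix eps :: real and n :: nat assume e: "0 < eps" and n: "1 \<le> n"
  show "\<exists>q. real q \<le> 4 / eps \<and> quantum_tester Lang n eps q"
  proof (cases "eps < 1")
    case False
    then show ?thesis using quantum_trivial[OF n] e by (intro exI[of _ 0]) auto
  next
    case True
    define t where "t = nat \<lceil>2 / eps\<rceil>"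
    have "0 < 2 / eps" using e by simp
    then have cpos: "\<lceil>2 / eps\<rceil> \<ge> 0" by (simp only: zero_le_ceiling)
    have tr: "real t = real_of_int \<lceil>2 / eps\<rceil>" unfolding t_def using cpos by simp
    have tge: "real t \<ge> 2 / eps" unfolding tr using ceiling_correct[of "2/eps"] by linarith
    have tle: "real t \<le> 2 / eps + 1" unfolding tr using ceiling_correct[of "2/eps"] by linarith
    have "2 / eps > 2" using True e by (simp add: field_simps)
    then have t1: "t \<ge> 1" using tge by linarith
    have et: "eps * real t \<ge> 2" using tge e by (simp add: field_simps)
    have "real (Suc t) \<le> 2 / eps + 2" using tle by simp
    also have "\<dots> \<le> 4 / eps" using True e by (simp add: field_simps)
    finally show ?thesis using quantum_main[OF n t1 e True et] by blast
  qed
qed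


theorem theorem3p1:
  shows "\<exists>L :: bool list set.
     (\<exists>C > 0. \<forall>eps > 0. \<forall>n \<ge> 1. \<exists>q. real q \<le> C / eps \<and> quantum_tester L n eps q) \<and>
     (\<exists>c > 0. \<exists>N. \<forall>n \<ge> N. \<forall>q. classical_tester L n (1/3) q \<longrightarrow> real q \<ge> c * ln (real n))"
  using quantum_part classical_part by blast

end
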